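(* Let $E$ be a Banach space over $\mathbb{K}$ and $m,n\in\mathbb{N}$. The map $J^{m,n}_E\colon E\to\mathcal{P}(^m\mathcal{P}(^nE))$, $J^{m,n}_E(x)(q)=q(x)^m$, is a continuous $mn$-homogeneous polynomial and $\|J^{m,n}_E(x)\|=\|x\|^{mn}$ for every $x\in E$.
   Context: Banach spaces are over $\mathbb{K}=\mathbb{R}$ or $\mathbb{C}$. $\mathcal{P}(^jX)$ is the Banach space of continuous $j$-homogeneous scalar-valued polynomials on $X$ with the sup norm over the closed unit ball. *)

theory Defs
  imports "HOL-Analysis.Analysis"
begin

text \<open>A normed space over the scalar field 'k, given by a carrier set with
  explicit vector operations and norm (needed because spaces of polynomials
  are sets of functions, not types).\<close>
record ('v, 'k) kspace =
  spc_carrier :: "'v set"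
  spc_add :: "'v \<Rightarrow> 'v \<Rightarrow> 'v"
  spc_smul :: "'k \<Rightarrow> 'v \<Rightarrow> 'v"
  spc_norm :: "'v \<Rightarrow> real"

definition spc_diff :: "('v, 'k::real_normed_field) kspace \<Rightarrow> 'v \<Rightarrow> 'v \<Rightarrow> 'v" where
  "spc_diff V y x = spc_add V y (spc_smul V (-1) x)"

text \<open>A Banach space over 'k: a real Banach space 'e together with a compatible
  'k-scalar multiplication (vector space axioms, agreement with the real
  scalar multiplication, absolute homogeneity of the norm).\<close>
definition K_banach_scaling :: "('k::{real_normed_field, banach} \<Rightarrow> 'e::banach \<Rightarrow> 'e) \<Rightarrow> bool" where
  "K_banach_scaling smul \<longleftrightarrow>
     (\<forall>a b x. smul a (smul b x) = smul (a * b) x) \<and>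
     (\<forall>x. smul 1 x = x) \<and>
     (\<forall>a x y. smul a (x + y) = smul a x + smul a y) \<and>
     (\<forall>a b x. smul (a + b) x = smul a x + smul b x) \<and>
     (\<forall>r x. smul (of_real r) x = scaleR r x) \<and>
     (\<forall>a x. norm (smul a x) = norm a * norm x)"

definition Espace :: "('k \<Rightarrow> 'e \<Rightarrow> 'e) \<Rightarrow> ('e::banach, 'k) kspace" where
  "Espace smul = \<lparr>spc_carrier = UNIV, spc_add = (+), spc_smul = smul, spc_norm = norm\<rparr>"

definition Kspace :: "('k::real_normed_field, 'k) kspace" where
  "Kspace = \<lparr>spc_carrier = UNIV, spc_add = (+), spc_smul = (*), spc_norm = norm\<rparr>"

definition multilinear_map ::
  "('v, 'k::real_normed_field) kspace \<Rightarrow> ('w, 'k) kspace \<Rightarrow> nat \<Rightarrow> ('v list \<Rightarrow> 'w) \<Rightarrow> bool" where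
  "multilinear_map V W j A \<longleftrightarrow>
     (\<forall>xs. set xs \<subseteq> spc_carrier V \<and> length xs = j \<longrightarrow> A xs \<in> spc_carrier W) \<and>
     (\<forall>xs i a b c. set xs \<subseteq> spc_carrier V \<and> length xs = j \<and> i < j \<and>
        a \<in> spc_carrier V \<and> b \<in> spc_carrier V \<longrightarrow>
        A (xs[i := spc_add V a b]) = spc_add W (A (xs[i := a])) (A (xs[i := b])) \<and>
        A (xs[i := spc_smul V c a]) = spc_smul W c (A (xs[i := a])))"

definition hom_poly ::
  "('v, 'k::real_normed_field) kspace \<Rightarrow> ('w, 'k) kspace \<Rightarrow> nat \<Rightarrow> ('v \<Rightarrow> 'w) \<Rightarrow> bool" where
  "hom_poly V W j P \<longleftrightarrow>
     (\<exists>A. multilinear_map V W j A \<and> (\<forall>x\<in>spc_carrier V. P x = A (replicate j x)))"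

definition spc_continuous ::
  "('v, 'k::real_normed_field) kspace \<Rightarrow> ('w, 'k) kspace \<Rightarrow> ('v \<Rightarrow> 'w) \<Rightarrow> bool" where
  "spc_continuous V W P \<longleftrightarrow>
     (\<forall>x\<in>spc_carrier V. \<forall>e>0. \<exists>d>0. \<forall>y\<in>spc_carrier V.
        spc_norm V (spc_diff V y x) < d \<longrightarrow> spc_norm W (spc_diff W (P y) (P x)) < e)"

definition cont_hom_poly ::
  "('v, 'k::real_normed_field) kspace \<Rightarrow> ('w, 'k) kspace \<Rightarrow> nat \<Rightarrow> ('v \<Rightarrow> 'w) \<Rightarrow> bool" where
  "cont_hom_poly V W j P \<longleftrightarrow> hom_poly V W j P \<and> spc_continuous V W P"

definition poly_norm :: "('v, 'k::real_normed_field) kspace \<Rightarrow> ('v \<Rightarrow> 'k) \<Rightarrow> real" where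
  "poly_norm V P = Sup {norm (P x) | x. x \<in> spc_carrier V \<and> spc_norm V x \<le> 1}"

text \<open>Elements are taken extensional
  (zero outside the carrier of V) so that function equality is equality on V.\<close>
definition Pspace :: "('v, 'k::real_normed_field) kspace \<Rightarrow> nat \<Rightarrow> ('v \<Rightarrow> 'k, 'k) kspace" where
  "Pspace V j = \<lparr>spc_carrier = {P. cont_hom_poly V Kspace j P \<and> (\<forall>x. x \<notin> spc_carrier V \<longrightarrow> P x = 0)},
                 spc_add = (\<lambda>P Q x. P x + Q x),
                 spc_smul = (\<lambda>c P x. c * P x),
                 spc_norm = poly_norm V\<rparr>"

definition Jmap :: "('k \<Rightarrow> 'e \<Rightarrow> 'e) \<Rightarrow> nat \<Rightarrow> nat \<Rightarrow> 'e::banach \<Rightarrow> ('e \<Rightarrow> 'k::real_normed_field) \<Rightarrow> 'k" where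
  "Jmap smul m n x q = (if q \<in> spc_carrier (Pspace (Espace smul) n) then q x ^ m else 0)"

end

theory Submission
  imports Defs "HOL-Analysis.Analysis" "HOL-Combinatorics.Multiset_Permutations"
begin

datatype 'a kc = KC (kre: 'a) (kim: 'a)

instantiation kc :: (comm_ring_1) comm_ring_1
begin
definition "0 = KC 0 0"
definition "1 = KC 1 0"
definition "p + q = KC (kre p + kre q) (kim p + kim q)"
definition "p - q = KC (kre p - kre q) (kim p - kim q)"
definition "- p = KC (- kre p) (- kim p)"
definition "p * q = KC (kre p * kre q - kim p * kim q) (kre p * kim q + kim p * kre q)"
instance
  by standard (auto simp: zero_kc_def one_kc_def plus_kc_def minus_kc_def uminus_kc_def
      times_kc_def kc.expand algebra_simps)
end

lemma kc_simps [simp]: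
  "kre 0 = 0" "kim 0 = 0" "kre 1 = 1" "kim 1 = 0"
  "kre (p + q) = kre p + kre q" "kim (p + q) = kim p + kim q"
  "kre (p - q) = kre p - kre q" "kim (p - q) = kim p - kim q"
  "kre (- p) = - kre p" "kim (- p) = - kim p"
  "kre (p * q) = kre p * kre q - kim p * kim q" "kim (p * q) = kre p * kim q + kim p * kre q"
  by (auto simp: zero_kc_def one_kc_def plus_kc_def minus_kc_def uminus_kc_def times_kc_def)

definition cemb :: "complex \<Rightarrow> 'k::real_normed_field kc" where
  "cemb z = KC (of_real (Re z)) (of_real (Im z))"

definition ishom :: "(complex \<Rightarrow> 'r::comm_ring_1) \<Rightarrow> bool" where
  "ishom h \<longleftrightarrow> (\<forall>a b. h (a * b) = h a * h b) \<and> (\<forall>a. h (- a) = - h a) \<and> h 1 = 1"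

lemma ishom_power: "ishom h \<Longrightarrow> h (c ^ k) = h c ^ k"
  by (induction k) (auto simp: ishom_def)

lemma roots_list:
  "\<exists>ws. length ws = 2 ^ r \<and> \<eta> \<in> set ws \<and>
     (\<forall>(h :: complex \<Rightarrow> 'r::comm_ring_1) y. ishom h \<longrightarrow> (\<Prod>w\<leftarrow>ws. y - h w) = y ^ (2 ^ r) - h \<eta> ^ (2 ^ r))"
proof (induction r arbitrary: \<eta>)
  case 0
  show ?case by (rule exI[of _ "[\<eta>]"]) auto
next
  case (Suc r)
  define M :: nat where "M = 2 ^ r"
  define \<zeta> where "\<zeta> = \<eta> * cis (pi / M)"
  have "\<zeta> ^ M = \<eta> ^ M * cis (pi / M) ^ M" by (simp add: \<zeta>_def power_mult_distrib)
  also have "cis (pi / M) ^ M = cis (real M * (pi / M))" by (rule Complex.DeMoivre)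
  also have "real M * (pi / M) = pi" by (simp add: M_def)
  finally have zM: "\<zeta> ^ M = - (\<eta> ^ M)" by simp
  obtain ws1 where w1: "length ws1 = M" "\<eta> \<in> set ws1"
    "\<forall>(h :: complex \<Rightarrow> 'r) y. ishom h \<longrightarrow> (\<Prod>w\<leftarrow>ws1. y - h w) = y ^ M - h \<eta> ^ M"
    using Suc.IH[of \<eta>] unfolding M_def by blast
  obtain ws2 where w2: "length ws2 = M"
    "\<forall>(h :: complex \<Rightarrow> 'r) y. ishom h \<longrightarrow> (\<Prod>w\<leftarrow>ws2. y - h w) = y ^ M - h \<zeta> ^ M"
    using Suc.IH[of \<zeta>] unfolding M_def by blast
  show ?case
  proof (rule exI[of _ "ws1 @ ws2"], intro conjI allI impI)
    show "length (ws1 @ ws2) = 2 ^ Suc r" using w1 w2 by (simp add: M_def)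
    show "\<eta> \<in> set (ws1 @ ws2)" using w1 by simp
    fix h :: "complex \<Rightarrow> 'r" and y assume h: "ishom h"
    have hz: "h \<zeta> ^ M = - (h \<eta> ^ M)"
      using zM h by (metis ishom_def ishom_power)
    have "(\<Prod>w\<leftarrow>ws1 @ ws2. y - h w) = (y ^ M - h \<eta> ^ M) * (y ^ M - h \<zeta> ^ M)"
      using w1 w2 h by simp
    also have "\<dots> = (y ^ M) ^ 2 - (h \<eta> ^ M) ^ 2" by (simp add: hz algebra_simps power2_eq_square)
    also have "\<dots> = y ^ (2 ^ Suc r) - h \<eta> ^ (2 ^ Suc r)"
      by (simp add: M_def power_mult[symmetric] mult.commute)
    finally show "(\<Prod>w\<leftarrow>ws1 @ ws2. y - h w) = y ^ (2 ^ Suc r) - h \<eta> ^ (2 ^ Suc r)" .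
  qed
qed

lemma ishom_cemb: "ishom (cemb :: complex \<Rightarrow> 'k::real_normed_field kc)"
  unfolding ishom_def cemb_def by (auto simp: kc.expand algebra_simps one_kc_def)

lemma ishom_cemb_cnj: "ishom (\<lambda>z. (cemb (cnj z) :: 'k::real_normed_field kc))"
  unfolding ishom_def cemb_def by (auto simp: kc.expand algebra_simps one_kc_def)

definition Qa :: "'k::real_normed_field \<Rightarrow> complex \<Rightarrow> 'k" where
  "Qa a z = a * a - of_real (2 * Re z) * a + of_real ((cmod z)\<^sup>2)"

definition nC :: "'k::real_normed_field kc \<Rightarrow> real" where
  "nC p = norm (kre p) + norm (kim p)"

lemma cemb_add: "cemb (a + b) = (cemb a + cemb b :: 'k::real_normed_field kc)"
  by (simp add: cemb_def kc.expand)

lemma Q_kc: "(KC a 0 - cemb z) * (KC a 0 - cemb (cnj z)) = KC (Qa a z) (0::'k::real_normed_field)"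
proof -
  have "(of_real ((cmod z)\<^sup>2) :: 'k) = of_real (Re z) * of_real (Re z) + of_real (Im z) * of_real (Im z)"
  proof -
    have "(cmod z)\<^sup>2 = Re z * Re z + Im z * Im z" using cmod_power2[of z] by (simp add: power2_eq_square)
    then show ?thesis by simp
  qed
  then show ?thesis
    by (intro kc.expand conjI)
       (simp_all add: cemb_def Qa_def algebra_simps)
qed

lemma nC_nonneg: "0 \<le> nC p" by (simp add: nC_def)

lemma nC_mult: "nC (p * q) \<le> nC p * nC q"
proof -
  have "nC (p * q) \<le> (norm (kre p) * norm (kre q) + norm (kim p) * norm (kim q))
     + (norm (kre p) * norm (kim q) + norm (kim p) * norm (kre q))"
    unfolding nC_def kc_simps
    by (intro add_mono order.trans[OF norm_triangle_ineq4] order.trans[OF norm_triangle_ineq])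
       (auto simp: norm_mult)
  also have "\<dots> = nC p * nC q" by (simp add: nC_def algebra_simps)
  finally show ?thesis .
qed

lemma nC_add: "nC (p + q) \<le> nC p + nC q"
  unfolding nC_def kc_simps using norm_triangle_ineq[of "kre p" "kre q"] norm_triangle_ineq[of "kim p" "kim q"]
  by simp

lemma nC_diff: "nC (p - q) \<le> nC p + nC q"
  unfolding nC_def kc_simps using norm_triangle_ineq4[of "kre p" "kre q"] norm_triangle_ineq4[of "kim p" "kim q"]
  by simp

lemma nC_power: "nC ((p :: 'k::real_normed_field kc) ^ k) \<le> nC p ^ k"
proof (induction k)
  case 0 then show ?case by (simp add: nC_def)
next
  case (Suc k)
  have "nC (p ^ Suc k) \<le> nC p * nC (p ^ k)" using nC_mult[of p "p ^ k"] by simp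
  also have "\<dots> \<le> nC p * nC p ^ k" using Suc by (intro mult_left_mono) (auto simp: nC_nonneg)
  finally show ?case by simp
qed

lemma nC_cemb: "nC (cemb w :: 'k::real_normed_field kc) \<le> 2 * cmod w"
  using abs_Re_le_cmod[of w] abs_Im_le_cmod[of w] by (simp add: nC_def cemb_def)

lemma KC_power: "(KC u 0) ^ k = KC (u ^ k) (0::'k::comm_ring_1)"
  by (induction k) (auto simp: kc.expand one_kc_def)

lemma prod_KC: "(\<Prod>w\<leftarrow>ws. KC (f w) 0) = KC (\<Prod>w\<leftarrow>ws. f w) (0::'k::comm_ring_1)"
  by (induction ws) (auto simp: kc.expand one_kc_def)

lemma prod_list_mult_map: "(\<Prod>w\<leftarrow>ws. f w * g w) = (\<Prod>w\<leftarrow>ws. f w) * (\<Prod>w\<leftarrow>ws. (g w :: 'a::comm_monoid_mult))"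
  by (induction ws) (auto simp: algebra_simps)

lemma norm_prod_list: "norm (\<Prod>w\<leftarrow>ws. f w) = (\<Prod>w\<leftarrow>ws. norm (f w :: 'k::real_normed_field))"
  by (induction ws) (auto simp: norm_mult)

lemma prod_list_ge_pow: "(\<forall>w. m \<le> g w) \<Longrightarrow> 0 \<le> m \<Longrightarrow> m ^ length ws \<le> (\<Prod>w\<leftarrow>ws. (g w :: real))"
proof (induction ws)
  case (Cons v vs)
  then have "m * m ^ length vs \<le> g v * (\<Prod>w\<leftarrow>vs. g w)"
    by (intro mult_mono) (auto intro: order.trans[of 0 m])
  then show ?case by simp
qed simp

lemma prod_list_ge:
  assumes "\<eta> \<in> set ws" "\<forall>w. m \<le> g w" "0 \<le> m"
  shows "g \<eta> * m ^ (length ws - 1) \<le> (\<Prod>w\<leftarrow>ws. (g w :: real))"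
  using assms(1)
proof (induction ws)
  case Nil then show ?case by simp
next
  case (Cons v vs)
  have gnn: "\<And>w. 0 \<le> g w" using assms by (meson order.trans)
  show ?case
  proof (cases "v = \<eta>")
    case True
    then show ?thesis using prod_list_ge_pow[of m g vs] assms gnn
      by (auto intro!: mult_left_mono)
  next
    case False
    then have "\<eta> \<in> set vs" using Cons by simp
    then have IH: "g \<eta> * m ^ (length vs - 1) \<le> (\<Prod>w\<leftarrow>vs. g w)" using Cons by simp
    from \<open>\<eta> \<in> set vs\<close> have "length vs \<ge> 1" by (cases vs) auto
    then have "g \<eta> * m ^ (length (v # vs) - 1) = m * (g \<eta> * m ^ (length vs - 1))"
      by (cases "length vs") auto
    also have "\<dots> \<le> g v * (\<Prod>w\<leftarrow>vs. g w)"
      using IH assms gnn by (intro mult_mono) (auto intro: mult_nonneg_nonneg)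
    finally show ?thesis by simp
  qed
qed

lemma key_ineq:
  fixes a :: "'k::real_normed_field"
  assumes ge: "\<forall>z. m \<le> norm (Qa a z)" and z0: "norm (Qa a z0) = m" and m: "0 \<le> m"
  shows "norm (Qa a (z0 + \<eta>)) * m ^ (2 ^ r - 1)
     \<le> m ^ (2 ^ r) + 2 * ((norm a + 2 * cmod z0) * (2 * cmod \<eta>)) ^ (2 ^ r) + ((cmod \<eta>)\<^sup>2) ^ (2 ^ r)"
proof -
  define N :: nat where "N = 2 ^ r"
  define B where "B = norm a + 2 * cmod z0"
  obtain ws where ws: "length ws = N" "\<eta> \<in> set ws"
    "\<forall>(h :: complex \<Rightarrow> 'k kc) y. ishom h \<longrightarrow> (\<Prod>w\<leftarrow>ws. y - h w) = y ^ N - h \<eta> ^ N"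
    using roots_list[of r \<eta>] unfolding N_def by blast
  define x :: "'k kc" where "x = KC a 0"
  define y where "y = x - cemb z0"
  define yb where "yb = x - cemb (cnj z0)"
  have 1: "KC (Qa a (z0 + w)) 0 = (y - cemb w) * (yb - cemb (cnj w))" for w
    using Q_kc[of a "z0 + w"] by (simp add: y_def yb_def x_def cemb_add algebra_simps)
  have "KC (\<Prod>w\<leftarrow>ws. Qa a (z0 + w)) 0 = (\<Prod>w\<leftarrow>ws. (y - cemb w) * (yb - cemb (cnj w)))"
    by (simp add: 1 flip: prod_KC)
  also have "\<dots> = (\<Prod>w\<leftarrow>ws. y - cemb w) * (\<Prod>w\<leftarrow>ws. yb - cemb (cnj w))"
    by (rule prod_list_mult_map)
  also have "\<dots> = (y ^ N - cemb \<eta> ^ N) * (yb ^ N - cemb (cnj \<eta>) ^ N)"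
  proof -
    have "(\<Prod>w\<leftarrow>ws. y - cemb w) = y ^ N - cemb \<eta> ^ N"
      using ws(3)[rule_format, OF ishom_cemb] by simp
    moreover have "(\<Prod>w\<leftarrow>ws. yb - cemb (cnj w)) = yb ^ N - cemb (cnj \<eta>) ^ N"
      using ws(3)[rule_format, OF ishom_cemb_cnj] by simp
    ultimately show ?thesis by simp
  qed
  also have "\<dots> = (y * yb) ^ N - (y ^ N * cemb (cnj \<eta>) ^ N + yb ^ N * cemb \<eta> ^ N)
      + (cemb \<eta> * cemb (cnj \<eta>)) ^ N"
    by (simp add: power_mult_distrib algebra_simps)
  also have "y * yb = KC (Qa a z0) 0" using Q_kc[of a z0] by (simp add: y_def yb_def x_def)
  also have "cemb \<eta> * cemb (cnj \<eta>) = (KC (of_real ((cmod \<eta>)\<^sup>2)) 0 :: 'k kc)"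
    using cmod_power2[of \<eta>] by (intro kc.expand conjI)
       (simp_all add: cemb_def power2_eq_square algebra_simps flip: of_real_mult of_real_add)
  finally have eq: "KC (\<Prod>w\<leftarrow>ws. Qa a (z0 + w)) 0 = KC (Qa a z0 ^ N) 0
      - (y ^ N * cemb (cnj \<eta>) ^ N + yb ^ N * cemb \<eta> ^ N) + KC (of_real ((cmod \<eta>)\<^sup>2) ^ N) 0"
    by (simp add: KC_power)
  define T where "T = y ^ N * cemb (cnj \<eta>) ^ N + yb ^ N * cemb \<eta> ^ N"
  have eqk: "(\<Prod>w\<leftarrow>ws. Qa a (z0 + w)) = Qa a z0 ^ N - kre T + of_real ((cmod \<eta>)\<^sup>2) ^ N"
    using arg_cong[OF eq, of kre] by (simp add: T_def)
  have ny: "nC y \<le> B" "nC yb \<le> B"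
    using norm_triangle_ineq4[of a "of_real (Re z0)"] abs_Re_le_cmod[of z0] abs_Im_le_cmod[of z0]
    by (auto simp: y_def yb_def x_def cemb_def nC_def B_def)
  have ne: "nC (cemb \<eta> :: 'k kc) \<le> 2 * cmod \<eta>" "nC (cemb (cnj \<eta>) :: 'k kc) \<le> 2 * cmod \<eta>"
    using nC_cemb[of \<eta>] nC_cemb[of "cnj \<eta>"] by auto
  have bnd: "nC (p ^ N * q ^ N) \<le> (B * (2 * cmod \<eta>)) ^ N" if "nC p \<le> B" "nC (q :: 'k kc) \<le> 2 * cmod \<eta>" for p q
  proof -
    have "nC (p ^ N * q ^ N) \<le> nC p ^ N * nC q ^ N"
      using nC_mult[of "p ^ N" "q ^ N"] nC_power[of p N] nC_power[of q N]
      by (meson mult_mono nC_nonneg order.trans zero_le_power)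
    also have "\<dots> \<le> B ^ N * (2 * cmod \<eta>) ^ N"
      using that by (intro mult_mono power_mono) (auto simp: nC_nonneg B_def)
    finally show ?thesis by (simp add: power_mult_distrib)
  qed
  have nT: "norm (kre T) \<le> 2 * (B * (2 * cmod \<eta>)) ^ N"
  proof -
    have "norm (kre T) \<le> nC T" by (simp add: nC_def)
    also have "\<dots> \<le> nC (y ^ N * cemb (cnj \<eta>) ^ N) + nC (yb ^ N * cemb \<eta> ^ N)"
      unfolding T_def by (rule nC_add)
    also have "\<dots> \<le> 2 * (B * (2 * cmod \<eta>)) ^ N" using bnd ny ne by (smt (verit))
    finally show ?thesis .
  qed
  have "(\<Prod>w\<leftarrow>ws. norm (Qa a (z0 + w))) = norm (\<Prod>w\<leftarrow>ws. Qa a (z0 + w))"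
    by (simp add: norm_prod_list)
  also have "\<dots> \<le> norm (Qa a z0 ^ N) + norm (kre T) + norm (of_real ((cmod \<eta>)\<^sup>2) ^ N :: 'k)"
    unfolding eqk by (meson norm_triangle_ineq norm_triangle_ineq4 order.trans add_mono order_refl)
  also have "\<dots> \<le> m ^ N + 2 * (B * (2 * cmod \<eta>)) ^ N + ((cmod \<eta>)\<^sup>2) ^ N"
    using nT z0 by (simp add: norm_power)
  finally have up: "(\<Prod>w\<leftarrow>ws. norm (Qa a (z0 + w))) \<le> m ^ N + 2 * (B * (2 * cmod \<eta>)) ^ N + ((cmod \<eta>)\<^sup>2) ^ N" .
  have low: "norm (Qa a (z0 + \<eta>)) * m ^ (length ws - 1) \<le> (\<Prod>w\<leftarrow>ws. norm (Qa a (z0 + w)))"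
    using prod_list_ge[of \<eta> ws m "\<lambda>w. norm (Qa a (z0 + w))"] ws ge m by auto
  show ?thesis using order.trans[OF low up] ws(1) unfolding N_def B_def by simp
qed

lemma lim_lemma:
  fixes \<alpha> \<beta> m F :: real
  assumes "0 \<le> \<alpha>" "\<alpha> < 1" "0 \<le> \<beta>" "\<beta> < 1" "0 < m"
    and h: "\<And>r. F * m ^ (2 ^ r - 1) \<le> m ^ (2 ^ r) + 2 * (m * \<alpha>) ^ (2 ^ r) + (m * \<beta>) ^ (2 ^ r)"
  shows "F \<le> m"
proof (rule ccontr)
  assume "\<not> F \<le> m"
  define d where "d = (F - m) / m"
  have d: "d > 0" using \<open>\<not> F \<le> m\<close> assms by (simp add: d_def)
  have "(\<lambda>k. \<alpha> ^ k) \<longlonglongrightarrow> 0" "(\<lambda>k. \<beta> ^ k) \<longlonglongrightarrow> 0"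
    using assms by (auto intro!: LIMSEQ_power_zero)
  then have "eventually (\<lambda>k. \<alpha> ^ k < d / 4) sequentially" "eventually (\<lambda>k. \<beta> ^ k < d / 4) sequentially"
    using d by (auto dest!: order_tendstoD(2)[where a = "d/4"])
  then obtain k where k: "\<alpha> ^ k < d / 4" "\<beta> ^ k < d / 4"
    using eventually_conj eventually_sequentially by (metis (no_types, lifting) order_refl)
  define N :: nat where "N = 2 ^ k"
  have kN: "k \<le> N" unfolding N_def using less_exp[of k] by simp
  have N1: "N \<ge> 1" unfolding N_def by simp
  have aN: "\<alpha> ^ N \<le> \<alpha> ^ k" "\<beta> ^ N \<le> \<beta> ^ k"
    using assms kN by (auto intro!: power_decreasing)
  have mN: "m ^ N = m * m ^ (N - 1)" using N1 by (cases N) auto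
  have "F * m ^ (N - 1) \<le> m ^ N + 2 * (m * \<alpha>) ^ N + (m * \<beta>) ^ N" using h[of k] by (simp add: N_def)
  also have "\<dots> = m ^ N * (1 + 2 * \<alpha> ^ N + \<beta> ^ N)" by (simp add: power_mult_distrib algebra_simps)
  also have "\<dots> < m ^ N * (1 + d)"
  proof -
    have "2 * \<alpha> ^ N + \<beta> ^ N < d" using aN k d by linarith
    then show ?thesis using assms by (intro mult_strict_left_mono) auto
  qed
  also have "\<dots> = F * m ^ (N - 1)" using assms by (simp add: mN d_def field_simps)
  finally show False by simp
qed

lemma Qa_cont: "continuous_on UNIV (\<lambda>z. norm (Qa (a::'k::real_normed_field) z))"
  unfolding Qa_def by (intro continuous_intros)

lemma Qa_coercive: "norm (Qa (a::'k::real_normed_field) z) \<ge> (cmod z)\<^sup>2 - 2 * cmod z * norm a - (norm a)\<^sup>2"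
proof -
  have "Qa a z = of_real ((cmod z)\<^sup>2) - (of_real (2 * Re z) * a - a * a)" by (simp add: Qa_def)
  then have "norm (Qa a z) \<ge> norm (of_real ((cmod z)\<^sup>2) :: 'k) - norm (of_real (2 * Re z) * a - a * a)"
    by (metis norm_triangle_ineq2)
  moreover have "norm (of_real (2 * Re z) * a - a * a) \<le> 2 * cmod z * norm a + (norm a)\<^sup>2"
  proof -
    have "2 * \<bar>Re z\<bar> * norm a \<le> 2 * cmod z * norm a"
      using abs_Re_le_cmod[of z] by (intro mult_right_mono) auto
    then show ?thesis
      using norm_triangle_ineq4[of "of_real (2 * Re z) * a" "a * a"]
      by (simp add: norm_mult power2_eq_square)
  qed
  moreover have "norm (of_real ((cmod z)\<^sup>2) :: 'k) = (cmod z)\<^sup>2" by (simp only: norm_of_real) simp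
  ultimately show ?thesis by simp
qed

lemma mazur:
  fixes a :: "'k::real_normed_field"
  shows "\<exists>z. Qa a z = 0"
proof -
  define F where "F z = norm (Qa a z)" for z
  have Fc: "continuous_on UNIV F" unfolding F_def by (rule Qa_cont)
  define R where "R = 3 * norm a + 1"
  have F0: "F 0 = (norm a)\<^sup>2" by (simp add: F_def Qa_def norm_mult power2_eq_square)
  have far: "F z > F 0" if "cmod z > R" for z
  proof -
    have "F z \<ge> cmod z * (cmod z - 2 * norm a) - (norm a)\<^sup>2"
      using Qa_coercive[where a=a and z=z] by (simp add: F_def power2_eq_square algebra_simps)
    moreover have "cmod z * (cmod z - 2 * norm a) \<ge> R * (norm a + 1)"
      using that by (intro mult_mono) (auto simp: R_def)
    moreover have "R * (norm a + 1) - (norm a)\<^sup>2 > (norm a)\<^sup>2"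
    proof -
      have h: "0 \<le> norm a * norm a" "0 \<le> norm a" by simp_all
      have "R * (norm a + 1) = 3 * (norm a * norm a) + 4 * norm a + 1"
        unfolding R_def by algebra
      with h show ?thesis unfolding power2_eq_square by linarith
    qed
    ultimately show ?thesis using F0 by linarith
  qed
  obtain z0 where z0: "z0 \<in> cball 0 R" "\<forall>y\<in>cball 0 R. F z0 \<le> F y"
  proof -
    have c: "continuous_on (cball 0 R) F" using Fc continuous_on_subset by blast
    have R0: "0 \<le> R" using norm_ge_zero[of a] unfolding R_def by linarith
    have "cball 0 R \<noteq> {}" using R0 by simp
    from continuous_attains_inf[OF compact_cball this c] show ?thesis using that by blast
  qed
  have glob: "F z0 \<le> F z" for z
  proof (cases "z \<in> cball 0 R")
    case False
    then have "F z > F 0" using far by (simp add: dist_norm)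
    moreover have "F z0 \<le> F 0" using z0 by (simp add: R_def)
    ultimately show ?thesis by simp
  qed (use z0 in auto)
  define m where "m = F z0"
  show ?thesis
  proof (cases "m = 0")
    case True then show ?thesis by (auto simp: m_def F_def)
  next
    case False
    then have m: "m > 0" by (simp add: m_def F_def)
    define S where "S = F -` {m}"
    have cl: "closed S" unfolding S_def by (rule closed_vimage[OF closed_singleton Fc])
    have op: "open S"
    proof (rule openI)
      fix z assume "z \<in> S"
      then have Fz: "F z = m" by (simp add: S_def)
      define B where "B = norm a + 2 * cmod z"
      have B0: "B \<ge> 0" by (simp add: B_def)
      define e where "e = min (m / (2 * B + 1)) (sqrt m)"
      have e: "e > 0" using m B0 by (simp add: e_def)
      have "ball z e \<subseteq> S"
      proof
        fix w assume "w \<in> ball z e"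
        define \<eta> where "\<eta> = w - z"
        have ne: "cmod \<eta> < e" using \<open>w \<in> ball z e\<close> by (simp add: \<eta>_def dist_norm norm_minus_commute)
        define \<alpha> where "\<alpha> = B * (2 * cmod \<eta>) / m"
        define \<beta> where "\<beta> = (cmod \<eta>)\<^sup>2 / m"
        have "cmod \<eta> * (2 * B + 1) < m"
          using ne m B0 by (simp add: e_def field_simps)
        moreover have "cmod \<eta> * (2 * B + 1) = B * (2 * cmod \<eta>) + cmod \<eta>" by algebra
        ultimately have "B * (2 * cmod \<eta>) < m" using norm_ge_zero[of \<eta>] by linarith
        then have a1: "\<alpha> < 1" using m by (simp add: \<alpha>_def)
        have "cmod \<eta> < sqrt m" using ne by (simp add: e_def)
        then have "(cmod \<eta>)\<^sup>2 < (sqrt m)\<^sup>2" by (intro power_strict_mono) auto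
        then have "(cmod \<eta>)\<^sup>2 < m" using m by simp
        then have b1: "\<beta> < 1" using m by (simp add: \<beta>_def)
        have "F (z + \<eta>) \<le> m"
        proof (rule lim_lemma[of \<alpha> \<beta>])
          show "0 \<le> \<alpha>" "0 \<le> \<beta>" using m B0 by (auto simp: \<alpha>_def \<beta>_def)
          fix r
          have "m * \<alpha> = B * (2 * cmod \<eta>)" "m * \<beta> = (cmod \<eta>)\<^sup>2" using m by (auto simp: \<alpha>_def \<beta>_def)
          moreover have "norm (Qa a (z + \<eta>)) * m ^ (2 ^ r - 1) \<le> m ^ (2 ^ r)
              + 2 * ((norm a + 2 * cmod z) * (2 * cmod \<eta>)) ^ (2 ^ r) + ((cmod \<eta>)\<^sup>2) ^ (2 ^ r)"
          proof (rule key_ineq)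
            show "\<forall>z. m \<le> norm (Qa a z)" using glob by (simp add: F_def m_def)
            show "norm (Qa a z) = m" using Fz by (simp add: F_def)
          qed (use m in simp)
          ultimately show "F (z + \<eta>) * m ^ (2 ^ r - 1) \<le> m ^ 2 ^ r + 2 * (m * \<alpha>) ^ 2 ^ r + (m * \<beta>) ^ 2 ^ r"
            by (simp only: F_def B_def)
        qed (use a1 b1 m in auto)
        moreover have "F (z + \<eta>) \<ge> m" using glob by (simp add: m_def)
        ultimately show "w \<in> S" by (simp add: S_def \<eta>_def)
      qed
      then show "\<exists>e>0. ball z e \<subseteq> S" using e by blast
    qed
    have "S \<noteq> {}" by (auto simp: S_def m_def)
    then have "S = UNIV" using clopen[of S] cl op by blast
    moreover define z1 where "z1 = complex_of_real (R + 1)"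
    ultimately have "F z1 = m" by (auto simp: S_def)
    moreover have "F z1 > F 0"
    proof (rule far)
      have "cmod z1 = R + 1" unfolding z1_def norm_of_real using norm_ge_zero[of a] by (simp add: R_def)
      then show "cmod z1 > R" by simp
    qed
    moreover have "m \<le> F 0" using glob by (simp add: m_def)
    ultimately show ?thesis by simp
  qed
qed

lemma Qa_eq: "Qa a z = (a - of_real (Re z)) * (a - of_real (Re z)) + of_real (Im z) * of_real (Im z)"
proof -
  have "(cmod z)\<^sup>2 = Re z * Re z + Im z * Im z" using cmod_power2[of z] by (simp add: power2_eq_square)
  then show ?thesis by (simp add: Qa_def algebra_simps)
qed

lemma sq_zero_field: "(x::'k::field) * x = 0 \<Longrightarrow> x = 0" by simp

lemma kfield_cases:
  fixes J :: "'k::real_normed_field"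
  assumes "a \<notin> range (of_real :: real \<Rightarrow> 'k)"
  shows "\<exists>J::'k. J * J = -1 \<and> (\<forall>b::'k. \<exists>w. b = of_real (Re w) + of_real (Im w) * J)"
proof -
  obtain z where z: "Qa a z = 0" using mazur by blast
  have "Im z \<noteq> 0"
  proof
    assume "Im z = 0"
    then have "(a - of_real (Re z)) * (a - of_real (Re z)) = 0" using z by (simp add: Qa_eq)
    then have "a = of_real (Re z)" by simp
    then show False using assms by auto
  qed
  define J where "J = (a - of_real (Re z)) / of_real (Im z)"
  have JJ: "J * J = -1"
  proof -
    have "(a - of_real (Re z)) * (a - of_real (Re z)) = - (of_real (Im z) * of_real (Im z))"
      using z by (simp add: Qa_eq eq_neg_iff_add_eq_0)
    then show ?thesis using \<open>Im z \<noteq> 0\<close> by (simp add: J_def field_simps)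
  qed
  have "\<exists>w. b = of_real (Re w) + of_real (Im w) * J" for b :: 'k
  proof -
    obtain u where u: "Qa b u = 0" using mazur by blast
    define t where "t = b - of_real (Re u)"
    have tt: "t * t = - (of_real (Im u) * of_real (Im u))"
      using u by (simp add: Qa_eq eq_neg_iff_add_eq_0 t_def)
    show ?thesis
    proof (cases "Im u = 0")
      case True
      then have "t = 0" using tt by simp
      then show ?thesis by (intro exI[of _ "complex_of_real (Re u)"]) (simp add: t_def)
    next
      case False
      define s where "s = t / of_real (Im u)"
      have "s * s = -1" using tt False by (simp add: s_def field_simps)
      then have "(s - J) * (s + J) = 0" using JJ by (simp add: algebra_simps)
      then have "s = J \<or> s = - J" by (auto simp: eq_neg_iff_add_eq_0)
      then show ?thesis
      proof
        assume "s = J"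
        then have "b = of_real (Re u) + of_real (Im u) * J" using False by (simp add: s_def t_def field_simps)
        then show ?thesis by (intro exI[of _ "Complex (Re u) (Im u)"]) simp
      next
        assume "s = - J"
        then have "b = of_real (Re u) + of_real (- Im u) * J" using False by (simp add: s_def t_def field_simps)
        then show ?thesis by (intro exI[of _ "Complex (Re u) (- Im u)"]) simp
      qed
    qed
  qed
  then show ?thesis using JJ by blast
qed

definition iota :: "'k::real_normed_field \<Rightarrow> complex \<Rightarrow> 'k" where
  "iota J w = of_real (Re w) + of_real (Im w) * J"

lemma iota_mult: "J * J = -1 \<Longrightarrow> iota J (z * w) = iota J z * iota J w"
proof -
  assume JJ: "J * J = -1"
  have "iota J z * iota J w = of_real (Re z * Re w) + of_real (Re z * Im w + Im z * Re w) * J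
     + of_real (Im z * Im w) * (J * J)"
    by (simp add: iota_def algebra_simps)
  also have "\<dots> = iota J (z * w)" using JJ by (simp add: iota_def algebra_simps)
  finally show ?thesis by simp
qed

lemma iota_add: "iota J (z + w) = iota J z + iota J w"
  by (simp add: iota_def algebra_simps)

lemma iota_of_real: "iota J (complex_of_real r) = of_real r"
  by (simp add: iota_def)

lemma iota_one: "iota J 1 = 1" by (simp add: iota_def)

lemma iota_power: "J * J = -1 \<Longrightarrow> iota J (z ^ k) = iota J z ^ k"
  by (induction k) (auto simp: iota_mult iota_one)

lemma iota_norm:
  fixes J :: "'k::real_normed_field"
  assumes JJ: "J * J = -1"
  shows "norm (iota J z) = cmod z"
proof -
  have nJ: "norm J = 1"
  proof -
    have "norm J * norm J = 1" using arg_cong[OF JJ, of norm] by (simp add: norm_mult)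
    then show ?thesis by (metis abs_norm_cancel norm_ge_zero real_sqrt_abs real_sqrt_mult_self
        real_sqrt_one abs_of_nonneg power2_eq_square real_sqrt_unique zero_le_one)
  qed
  have up: "norm (iota J w) \<le> 2 * cmod w" for w
  proof -
    have "norm (iota J w) \<le> \<bar>Re w\<bar> + \<bar>Im w\<bar>"
      unfolding iota_def using norm_triangle_ineq[of "of_real (Re w) :: 'k" "of_real (Im w) * J"] nJ
      by (simp add: norm_mult)
    then show ?thesis using abs_Re_le_cmod[of w] abs_Im_le_cmod[of w] by simp
  qed
  have unit_le: "norm (iota J u) \<le> 1" if "cmod u = 1" for u
  proof (rule ccontr)
    assume "\<not> ?thesis"
    then obtain k where "2 < norm (iota J u) ^ k" using real_arch_pow[of "norm (iota J u)" 2] by force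
    moreover have "norm (iota J u) ^ k = norm (iota J (u ^ k))" by (simp add: iota_power JJ norm_power)
    moreover have "norm (iota J (u ^ k)) \<le> 2" using up[of "u ^ k"] that by (simp add: norm_power)
    ultimately show False by simp
  qed
  have unit: "norm (iota J u) = 1" if "cmod u = 1" for u
  proof -
    have "u \<noteq> 0" using that by auto
    have "iota J u * iota J (inverse u) = 1" using \<open>u \<noteq> 0\<close> by (simp add: iota_one flip: iota_mult[OF JJ])
    then have "norm (iota J u) * norm (iota J (inverse u)) = 1" by (metis norm_mult norm_one)
    moreover have "norm (iota J (inverse u)) \<le> 1" using unit_le[of "inverse u"] that by (simp add: norm_inverse)
    moreover have "norm (iota J u) \<le> 1" using unit_le that by simp
    ultimately show ?thesis
      by (metis mult_le_one mult_right_le_one_le norm_ge_zero order_antisym_conv)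
  qed
  show ?thesis
  proof (cases "z = 0")
    case True then show ?thesis by (simp add: iota_def)
  next
    case False
    define u where "u = z / complex_of_real (cmod z)"
    have "cmod u = 1" using False by (simp add: u_def norm_divide)
    have "z = complex_of_real (cmod z) * u" using False by (simp add: u_def)
    then have "iota J z = of_real (cmod z) * iota J u" by (metis iota_mult[OF JJ] iota_of_real)
    then show ?thesis using unit[OF \<open>cmod u = 1\<close>] by (simp add: norm_mult)
  qed
qed

definition hbG :: "'e::real_normed_vector \<Rightarrow> ('e \<times> real) set \<Rightarrow> bool" where
  "hbG x G \<longleftrightarrow> (\<forall>p\<in>G. \<forall>q\<in>G. (fst p + fst q, snd p + snd q) \<in> G)
     \<and> (\<forall>p\<in>G. \<forall>r. (r *\<^sub>R fst p, r * snd p) \<in> G)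
     \<and> (\<forall>p\<in>G. \<forall>q\<in>G. fst p = fst q \<longrightarrow> snd p = snd q)
     \<and> (\<forall>p\<in>G. snd p \<le> norm (fst p)) \<and> (x, norm x) \<in> G"

lemma hbG_add: "hbG x G \<Longrightarrow> (u, a) \<in> G \<Longrightarrow> (v, b) \<in> G \<Longrightarrow> (u + v, a + b) \<in> G"
  unfolding hbG_def by (metis fst_conv snd_conv)
lemma hbG_sc: "hbG x G \<Longrightarrow> (u, a) \<in> G \<Longrightarrow> (r *\<^sub>R u, r * a) \<in> G"
  unfolding hbG_def by (metis fst_conv snd_conv)
lemma hbG_fun: "hbG x G \<Longrightarrow> (u, a) \<in> G \<Longrightarrow> (u, b) \<in> G \<Longrightarrow> a = b"
  unfolding hbG_def by (metis fst_conv snd_conv)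
lemma hbG_le: "hbG x G \<Longrightarrow> (u, a) \<in> G \<Longrightarrow> a \<le> norm u"
  unfolding hbG_def by (metis fst_conv snd_conv)
lemma hbG_x: "hbG x G \<Longrightarrow> (x, norm x) \<in> G"
  unfolding hbG_def by blast

lemma hb_chain:
  assumes C: "C \<in> chains {G. hbG x G}" "C \<noteq> {}"
  shows "hbG x (\<Union>C)"
proof -
  have hb: "\<And>G. G \<in> C \<Longrightarrow> hbG x G" using C by (auto simp: chains_def)
  have two: "\<exists>G\<in>C. p \<in> G \<and> q \<in> G" if pq: "p \<in> \<Union>C" "q \<in> \<Union>C" for p q
  proof -
    obtain G1 G2 where "G1 \<in> C" "G2 \<in> C" "p \<in> G1" "q \<in> G2" using pq by blast
    moreover have "G1 \<subseteq> G2 \<or> G2 \<subseteq> G1" using C \<open>G1 \<in> C\<close> \<open>G2 \<in> C\<close>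
      by (auto simp: chains_def chain_subset_def)
    ultimately show ?thesis by blast
  qed
  show ?thesis unfolding hbG_def
  proof (intro conjI ballI allI impI)
    fix p q assume "p \<in> \<Union>C" "q \<in> \<Union>C"
    then obtain G where "G \<in> C" "p \<in> G" "q \<in> G" using two by blast
    then show "(fst p + fst q, snd p + snd q) \<in> \<Union>C" using hb[of G] unfolding hbG_def by blast
  next
    fix p q assume "p \<in> \<Union>C" "q \<in> \<Union>C" "fst p = fst q"
    then obtain G where "G \<in> C" "p \<in> G" "q \<in> G" using two by blast
    then show "snd p = snd q" using hb[of G] \<open>fst p = fst q\<close> unfolding hbG_def by blast
  next
    fix p r assume "p \<in> \<Union>C"
    then obtain G where "G \<in> C" "p \<in> G" by blast
    then show "(r *\<^sub>R fst p, r * snd p) \<in> \<Union>C" using hb[of G] unfolding hbG_def by blast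
  next
    fix p assume "p \<in> \<Union>C"
    then obtain G where "G \<in> C" "p \<in> G" by blast
    then show "snd p \<le> norm (fst p)" using hb[of G] unfolding hbG_def by blast
  next
    obtain G where "G \<in> C" using C by blast
    then show "(x, norm x) \<in> \<Union>C" using hb[of G] unfolding hbG_def by blast
  qed
qed

lemma hb_G0: "hbG x {(r *\<^sub>R x, r * norm x) | r. True}"
  unfolding hbG_def
proof (intro conjI ballI allI impI)
  fix p q assume "p \<in> {(r *\<^sub>R x, r * norm x) |r. True}" "q \<in> {(r *\<^sub>R x, r * norm x) |r. True}"
    "fst p = fst q"
  then obtain r s where "p = (r *\<^sub>R x, r * norm x)" "q = (s *\<^sub>R x, s * norm x)" by blast
  moreover with \<open>fst p = fst q\<close> have "r *\<^sub>R x = s *\<^sub>R x" by simp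
  ultimately show "snd p = snd q" by (cases "x = 0") auto
next
  fix p assume "p \<in> {(r *\<^sub>R x, r * norm x) |r. True}"
  then obtain r where "p = (r *\<^sub>R x, r * norm x)" by auto
  then show "snd p \<le> norm (fst p)" by (simp add: mult_right_mono)
next
  show "(x, norm x) \<in> {(r *\<^sub>R x, r * norm x) |r. True}" by (rule CollectI, rule exI[of _ 1]) simp
next
  fix p q assume "p \<in> {(r *\<^sub>R x, r * norm x) |r. True}" "q \<in> {(r *\<^sub>R x, r * norm x) |r. True}"
  then obtain r s where "p = (r *\<^sub>R x, r * norm x)" "q = (s *\<^sub>R x, s * norm x)" by blast
  then show "(fst p + fst q, snd p + snd q) \<in> {(r *\<^sub>R x, r * norm x) |r. True}"
    by (intro CollectI exI[of _ "r + s"]) (simp add: algebra_simps)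
next
  fix p t assume "p \<in> {(r *\<^sub>R x, r * norm x) |r. True}"
  then obtain r where "p = (r *\<^sub>R x, r * norm x)" by blast
  then show "(t *\<^sub>R fst p, t * snd p) \<in> {(r *\<^sub>R x, r * norm x) |r. True}"
    by (intro CollectI exI[of _ "t * r"]) (simp add: algebra_simps)
qed

lemma hb_extend:
  fixes x :: "'e::real_normed_vector"
  assumes G: "hbG x G" and y: "y \<notin> fst ` G"
  shows "\<exists>G'. hbG x G' \<and> G \<subseteq> G' \<and> G' \<noteq> G"
proof -
  define M where "M = fst ` G"
  define g where "g u = (THE a. (u, a) \<in> G)" for u
  have gG: "(u, g u) \<in> G" if uM: "u \<in> M" for u
  proof -
    obtain a where a: "(u, a) \<in> G" using uM by (auto simp: M_def)
    have "(THE a. (u, a) \<in> G) = a"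
      using a hbG_fun[OF G] by (intro the_equality) auto
    then show ?thesis using a by (simp add: g_def)
  qed
  have gval: "g u = a" if "(u, a) \<in> G" for u a
  proof -
    have "u \<in> M" using that by (force simp: M_def)
    then show ?thesis using gG[of u] that hbG_fun[OF G] by blast
  qed
  have inM: "u \<in> M" if "(u, a) \<in> G" for u a using that by (force simp: M_def)
  have Madd: "u + v \<in> M" "g (u + v) = g u + g v" if "u \<in> M" "v \<in> M" for u v
  proof -
    have "(u + v, g u + g v) \<in> G" using hbG_add[OF G gG[OF that(1)] gG[OF that(2)]] .
    then show "u + v \<in> M" "g (u + v) = g u + g v" by (rule inM, rule gval)
  qed
  have Msc: "r *\<^sub>R u \<in> M" "g (r *\<^sub>R u) = r * g u" if "u \<in> M" for u r
  proof -
    have "(r *\<^sub>R u, r * g u) \<in> G" using hbG_sc[OF G gG[OF that]] .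
    then show "r *\<^sub>R u \<in> M" "g (r *\<^sub>R u) = r * g u" by (rule inM, rule gval)
  qed
  have gle: "g u \<le> norm u" if "u \<in> M" for u using hbG_le[OF G gG[OF that]] .
  have xM: "x \<in> M" "g x = norm x" using hbG_x[OF G] by (rule inM, rule gval)
  have zM: "0 \<in> M" using Msc(1)[OF xM(1), of 0] by simp
  have yM: "y \<notin> M" using y by (simp add: M_def)
  define S where "S = {g m - norm (m - y) | m. m \<in> M}"
  have key: "g m - norm (m - y) \<le> norm (m' + y) - g m'" if "m \<in> M" "m' \<in> M" for m m'
  proof -
    have "g m + g m' = g (m + m')" using Madd that by simp
    also have "\<dots> \<le> norm (m + m')" using gle[OF Madd(1)[OF that]] .
    also have "m + m' = (m - y) + (m' + y)" by simp
    also have "norm \<dots> \<le> norm (m - y) + norm (m' + y)" by (rule norm_triangle_ineq)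
    finally show ?thesis by simp
  qed
  have Sne: "S \<noteq> {}" using zM by (auto simp: S_def)
  have Sbdd: "bdd_above S" unfolding bdd_above_def S_def using key[OF _ zM] by auto
  define c where "c = Sup S"
  have c_up: "c \<le> norm (m' + y) - g m'" if "m' \<in> M" for m'
    unfolding c_def using Sne key[OF _ that] by (intro cSup_least) (auto simp: S_def)
  have c_low: "g m - norm (m - y) \<le> c" if "m \<in> M" for m
    unfolding c_def using Sbdd that by (intro cSup_upper) (auto simp: S_def)
  define G' where "G' = {(u + t *\<^sub>R y, g u + t * c) | u t. u \<in> M}"
  have uniq: "u = v \<and> t = s" if "u \<in> M" "v \<in> M" "u + t *\<^sub>R y = v + s *\<^sub>R y" for u v t s
  proof (cases "t = s")
    case True then show ?thesis using that by simp
  next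
    case False
    have ts: "(t - s) *\<^sub>R y = v - u" using that by (simp add: algebra_simps)
    have "y = (1 / (t - s)) *\<^sub>R ((t - s) *\<^sub>R y)" using False by simp
    also have "\<dots> = (1 / (t - s)) *\<^sub>R (v + (-1) *\<^sub>R u)" using ts by simp
    also have "\<dots> \<in> M" using Msc(1)[OF Madd(1)[OF that(2) Msc(1)[OF that(1)]]] .
    finally show ?thesis using yM by simp
  qed
  have dom: "g u + t * c \<le> norm (u + t *\<^sub>R y)" if "u \<in> M" for u t
  proof (cases "t = 0")
    case True then show ?thesis using gle that by simp
  next
    case False
    show ?thesis
    proof (cases "t > 0")
      case True
      have "c \<le> norm ((1/t) *\<^sub>R u + y) - g ((1/t) *\<^sub>R u)" using c_up[OF Msc(1)[OF that]] .
      then have "t * c \<le> t * (norm ((1/t) *\<^sub>R u + y) - g ((1/t) *\<^sub>R u))" using True by simp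
      also have "\<dots> = norm (u + t *\<^sub>R y) - g u"
      proof -
        have "t * norm ((1/t) *\<^sub>R u + y) = norm (t *\<^sub>R ((1/t) *\<^sub>R u + y))" using True by simp
        also have "t *\<^sub>R ((1/t) *\<^sub>R u + y) = u + t *\<^sub>R y" using True by (simp add: algebra_simps)
        finally show ?thesis using Msc(2)[OF that] True by (simp add: algebra_simps)
      qed
      finally show ?thesis by simp
    next
      case False
      with \<open>t \<noteq> 0\<close> have s: "- t > 0" by simp
      have "g ((1/(-t)) *\<^sub>R u) - norm ((1/(-t)) *\<^sub>R u - y) \<le> c" using c_low[OF Msc(1)[OF that]] .
      then have "(-t) * (g ((1/(-t)) *\<^sub>R u) - norm ((1/(-t)) *\<^sub>R u - y)) \<le> (-t) * c"
        using s by (simp only: mult_left_mono less_imp_le)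
      also have "(-t) * (g ((1/(-t)) *\<^sub>R u) - norm ((1/(-t)) *\<^sub>R u - y)) = g u - norm (u + t *\<^sub>R y)"
      proof -
        have "(-t) * norm ((1/(-t)) *\<^sub>R u - y) = norm ((-t) *\<^sub>R ((1/(-t)) *\<^sub>R u - y))" using s by simp
        also have "(-t) *\<^sub>R ((1/(-t)) *\<^sub>R u - y) = u + t *\<^sub>R y" using s by (simp add: algebra_simps)
        finally have e1: "(-t) * norm ((1/(-t)) *\<^sub>R u - y) = norm (u + t *\<^sub>R y)" .
        have e2: "(-t) * g ((1/(-t)) *\<^sub>R u) = g u" unfolding Msc(2)[OF that] using s by simp
        show ?thesis by (simp only: right_diff_distrib e1 e2)
      qed
      finally show ?thesis by simp
    qed
  qed
  have "hbG x G'" unfolding hbG_def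
  proof (intro conjI ballI allI impI)
    fix p q assume "p \<in> G'" "q \<in> G'"
    then obtain u t v s where "u \<in> M" "v \<in> M" "p = (u + t *\<^sub>R y, g u + t * c)" "q = (v + s *\<^sub>R y, g v + s * c)"
      by (auto simp: G'_def)
    then show "(fst p + fst q, snd p + snd q) \<in> G'" unfolding G'_def
      by (intro CollectI exI[of _ "u + v"] exI[of _ "t + s"]) (auto simp: Madd algebra_simps)
  next
    fix p r assume "p \<in> G'"
    then obtain u t where "u \<in> M" "p = (u + t *\<^sub>R y, g u + t * c)" by (auto simp: G'_def)
    then show "(r *\<^sub>R fst p, r * snd p) \<in> G'" unfolding G'_def
      by (intro CollectI exI[of _ "r *\<^sub>R u"] exI[of _ "r * t"]) (auto simp: Msc algebra_simps)
  next
    fix p q assume "p \<in> G'" "q \<in> G'" "fst p = fst q"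
    then obtain u t v s where "u \<in> M" "v \<in> M" "p = (u + t *\<^sub>R y, g u + t * c)" "q = (v + s *\<^sub>R y, g v + s * c)"
      by (auto simp: G'_def)
    then show "snd p = snd q" using uniq[of u v t s] \<open>fst p = fst q\<close> by auto
  next
    fix p assume "p \<in> G'"
    then obtain u t where "u \<in> M" "p = (u + t *\<^sub>R y, g u + t * c)" by (auto simp: G'_def)
    then show "snd p \<le> norm (fst p)" using dom by simp
  next
    show "(x, norm x) \<in> G'" unfolding G'_def using xM
      by (intro CollectI exI[of _ x] exI[of _ 0]) simp
  qed
  moreover have "G \<subseteq> G'"
  proof
    fix p assume "p \<in> G"
    then have "fst p \<in> M" "snd p = g (fst p)" using gval[of "fst p" "snd p"] by (auto simp: M_def)
    then show "p \<in> G'" unfolding G'_def by (intro CollectI exI[of _ "fst p"] exI[of _ 0]) (simp add: prod_eq_iff)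
  qed
  moreover have "(y, g 0 + c) \<in> G'" unfolding G'_def using zM
    by (intro CollectI exI[of _ 0] exI[of _ 1]) simp
  then have "G' \<noteq> G" using y by force
  ultimately show ?thesis by blast
qed

theorem real_hahn_banach:
  fixes x :: "'e::real_normed_vector"
  shows "\<exists>f. (\<forall>u v. f (u + v) = f u + f v) \<and> (\<forall>r u. f (r *\<^sub>R u) = r * f u)
     \<and> (\<forall>u. \<bar>f u\<bar> \<le> norm u) \<and> f x = norm x"
proof -
  have "\<forall>C\<in>chains {G. hbG x G}. \<exists>U\<in>{G. hbG x G}. \<forall>X\<in>C. X \<subseteq> U"
  proof
    fix C assume C: "C \<in> chains {G. hbG x G}"
    show "\<exists>U\<in>{G. hbG x G}. \<forall>X\<in>C. X \<subseteq> U"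
    proof (cases "C = {}")
      case True then show ?thesis using hb_G0[of x] by blast
    next
      case False then show ?thesis using hb_chain[OF C] by blast
    qed
  qed
  from Zorn_Lemma2[OF this] obtain G where G: "hbG x G" and max: "\<And>X. hbG x X \<Longrightarrow> G \<subseteq> X \<Longrightarrow> X = G"
    by blast
  have all: "y \<in> fst ` G" for y
  proof (rule ccontr)
    assume "y \<notin> fst ` G"
    from hb_extend[OF G this] obtain G' where "hbG x G'" "G \<subseteq> G'" "G' \<noteq> G" by blast
    then show False using max by blast
  qed
  define f where "f u = (THE a. (u, a) \<in> G)" for u
  have fG: "(u, f u) \<in> G" for u
  proof -
    obtain a where a: "(u, a) \<in> G" using all[of u] by force
    have "(THE a. (u, a) \<in> G) = a"
      using a hbG_fun[OF G] by (intro the_equality) auto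
    then show ?thesis using a by (simp add: f_def)
  qed
  have fval: "f u = a" if "(u, a) \<in> G" for u a
    using fG[of u] that hbG_fun[OF G] by blast
  have add: "f (u + v) = f u + f v" for u v
    using fval[OF hbG_add[OF G fG[of u] fG[of v]]] .
  have sc: "f (r *\<^sub>R u) = r * f u" for r u
    using fval[OF hbG_sc[OF G fG[of u]]] .
  have le: "f u \<le> norm u" for u using hbG_le[OF G fG[of u]] .
  have "\<bar>f u\<bar> \<le> norm u" for u
    using le[of u] le[of "-u"] sc[of "-1" u] by (simp add: abs_le_iff)
  moreover have "f x = norm x" using fval[OF hbG_x[OF G]] .
  ultimately show ?thesis using add sc by blast
qed

lemma KBS:
  assumes "K_banach_scaling smul"
  shows "smul a (smul b x) = smul (a * b) x" "smul 1 x = x"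
    "smul a (x + y) = smul a x + smul a y" "smul (a + b) x = smul a x + smul b x"
    "smul (of_real r) x = scaleR r x" "norm (smul a x) = norm a * norm x"
  using assms unfolding K_banach_scaling_def by blast+

lemma kHB:
  fixes smul :: "'k::{real_normed_field,banach} \<Rightarrow> 'e::banach \<Rightarrow> 'e"
  assumes S: "K_banach_scaling smul"
  shows "\<exists>\<phi>::'e \<Rightarrow> 'k. (\<forall>a y. \<phi> (smul a y) = a * \<phi> y) \<and> (\<forall>y z. \<phi> (y + z) = \<phi> y + \<phi> z)
     \<and> (\<forall>y. norm (\<phi> y) \<le> norm y) \<and> norm (\<phi> x) = norm x"
proof -
  obtain f where fadd: "\<And>u v. f (u + v) = f u + f v" and fsc: "\<And>r u. f (r *\<^sub>R u) = r * f u"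
    and fle: "\<And>u. \<bar>f u\<bar> \<le> norm u" and fx: "f x = norm x"
    using real_hahn_banach[of x] by blast
  show ?thesis
  proof (cases "\<forall>a::'k. a \<in> range of_real")
    case True
    define \<phi> where "\<phi> y = (of_real (f y) :: 'k)" for y
    have "\<phi> (smul a y) = a * \<phi> y" for a y
    proof -
      obtain r where a: "a = of_real r" using True by blast
      show ?thesis by (simp add: a KBS(5)[OF S] fsc \<phi>_def)
    qed
    moreover have "\<phi> (y + z) = \<phi> y + \<phi> z" for y z by (simp add: \<phi>_def fadd)
    moreover have "norm (\<phi> y) \<le> norm y" for y using fle by (simp add: \<phi>_def)
    moreover have "norm (\<phi> x) = norm x" by (simp add: \<phi>_def fx)
    ultimately show ?thesis by blast
  next
    case False
    then obtain a0 :: 'k where "a0 \<notin> range of_real" by blast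
    from kfield_cases[OF this] obtain J :: 'k where JJ: "J * J = -1"
      and surj: "\<And>b. \<exists>w. b = of_real (Re w) + of_real (Im w) * J" by blast
    have surjI: "\<exists>w. b = iota J w" for b using surj[of b] by (simp add: iota_def)
    define g where "g y = Complex (f y) (- f (smul J y))" for y
    define \<phi> where "\<phi> y = iota J (g y)" for y
    have smJr: "smul J (r *\<^sub>R y) = r *\<^sub>R smul J y" for r y
    proof -
      have "smul J (r *\<^sub>R y) = smul J (smul (of_real r) y)" by (simp add: KBS(5)[OF S])
      also have "\<dots> = smul (of_real r) (smul J y)" by (simp add: KBS(1)[OF S] mult.commute)
      finally show ?thesis by (simp add: KBS(5)[OF S])
    qed
    have gadd: "g (y + z) = g y + g z" for y z by (simp add: g_def KBS(3)[OF S] fadd complex_eq_iff)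
    have gsc: "g (r *\<^sub>R y) = complex_of_real r * g y" for r y
      by (simp add: g_def smJr fsc complex_eq_iff)
    have smJJ: "smul J (smul J y) = - y" for y
    proof -
      have "smul J (smul J y) = smul (of_real (-1)) y" by (simp add: KBS(1)[OF S] JJ)
      also have "\<dots> = - y" using KBS(5)[OF S, of "-1" y] by simp
      finally show ?thesis .
    qed
    have gJ: "g (smul J y) = \<i> * g y" for y
    proof -
      have "f (- y) = - f y" using fsc[of "-1" y] by simp
      then show ?thesis by (simp add: g_def smJJ complex_eq_iff)
    qed
    have smiota: "smul (iota J w) y = Re w *\<^sub>R y + Im w *\<^sub>R smul J y" for w y
    proof -
      have "smul (iota J w) y = smul (of_real (Re w)) y + smul (of_real (Im w) * J) y"
        by (simp add: iota_def KBS(4)[OF S])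
      also have "smul (of_real (Im w) * J) y = smul (of_real (Im w)) (smul J y)" by (simp add: KBS(1)[OF S])
      finally show ?thesis by (simp add: KBS(5)[OF S])
    qed
    have giota: "g (smul (iota J w) y) = w * g y" for w y
    proof -
      have "g (smul (iota J w) y) = complex_of_real (Re w) * g y + complex_of_real (Im w) * (\<i> * g y)"
        by (simp add: smiota gadd gsc gJ)
      also have "\<dots> = (complex_of_real (Re w) + \<i> * complex_of_real (Im w)) * g y" by (simp add: algebra_simps)
      also have "complex_of_real (Re w) + \<i> * complex_of_real (Im w) = w" by (simp add: complex_eq_iff)
      finally show ?thesis .
    qed
    have "\<phi> (smul a y) = a * \<phi> y" for a y
    proof -
      obtain w where a: "a = iota J w" using surjI by blast
      show ?thesis by (simp add: a \<phi>_def giota iota_mult[OF JJ])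
    qed
    moreover have "\<phi> (y + z) = \<phi> y + \<phi> z" for y z by (simp add: \<phi>_def gadd iota_add)
    moreover have nphi: "norm (\<phi> y) = cmod (g y)" for y by (simp add: \<phi>_def iota_norm[OF JJ])
    moreover have bnd: "norm (\<phi> y) \<le> norm y" for y
    proof (cases "g y = 0")
      case True then show ?thesis by (simp add: nphi)
    next
      case False
      define w where "w = cnj (g y) / complex_of_real (cmod (g y))"
      have wn: "cmod w = 1" using False by (simp add: w_def norm_divide)
      have "w * g y = complex_of_real (cmod (g y))"
        using False by (simp add: w_def complex_norm_square[symmetric] power2_eq_square field_simps)
      then have "g (smul (iota J w) y) = complex_of_real (cmod (g y))" by (simp add: giota)
      then have "f (smul (iota J w) y) = cmod (g y)" by (simp add: g_def complex_eq_iff)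
      then have "cmod (g y) \<le> norm (smul (iota J w) y)" using fle by (metis abs_le_D1)
      also have "\<dots> = norm y" by (simp add: KBS(6)[OF S] iota_norm[OF JJ] wn)
      finally show ?thesis by (simp add: nphi)
    qed
    moreover have "norm (\<phi> x) = norm x"
    proof -
      have "norm x = \<bar>Re (g x)\<bar>" by (simp add: g_def fx)
      also have "\<dots> \<le> cmod (g x)" by (rule abs_Re_le_cmod)
      finally have "norm x \<le> norm (\<phi> x)" by (simp add: nphi)
      moreover have "norm (\<phi> x) \<le> norm x" by (rule bnd)
      ultimately show ?thesis by simp
    qed
    ultimately show ?thesis by blast
  qed
qed

lemma alt_sum_pow:
  assumes "finite D"
  shows "(\<Sum>R\<in>Pow D. (-1::'a::comm_ring_1) ^ card R) = (if D = {} then 1 else 0)"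
  using assms
proof (induction D rule: finite_induct)
  case empty then show ?case by simp
next
  case (insert a D)
  have fin: "finite (Pow D)" "finite (insert a ` Pow D)" using insert by auto
  have disj: "Pow D \<inter> insert a ` Pow D = {}" using insert by auto
  have inj: "inj_on (insert a) (Pow D)"
  proof (rule inj_onI)
    fix X Y assume XY: "X \<in> Pow D" "Y \<in> Pow D" "insert a X = insert a Y"
    then have "a \<notin> X" "a \<notin> Y" using insert by auto
    with XY show "X = Y" by (metis Diff_insert_absorb)
  qed
  have "(\<Sum>R\<in>Pow (insert a D). (-1::'a) ^ card R)
      = (\<Sum>R\<in>Pow D. (-1::'a) ^ card R) + (\<Sum>R\<in>insert a ` Pow D. (-1::'a) ^ card R)"
    unfolding Pow_insert by (rule sum.union_disjoint[OF fin disj])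
  also have "(\<Sum>R\<in>insert a ` Pow D. (-1::'a) ^ card R) = (\<Sum>R\<in>Pow D. (-1::'a) ^ card (insert a R))"
    by (rule sum.reindex[OF inj, unfolded comp_def])
  also have "\<dots> = (\<Sum>R\<in>Pow D. - ((-1::'a) ^ card R))"
  proof (rule sum.cong[OF refl])
    fix R assume "R \<in> Pow D"
    then have "finite R" "a \<notin> R" using insert finite_subset by auto
    then show "(-1::'a) ^ card (insert a R) = - ((-1) ^ card R)" by simp
  qed
  finally show ?case by (simp add: sum_negf)
qed

lemma incl_excl:
  assumes U: "finite U" and B: "B \<subseteq> U"
  shows "(\<Sum>T\<in>{T\<in>Pow U. B \<subseteq> T}. (-1::'a::comm_ring_1) ^ card T) = (if B = U then (-1) ^ card U else 0)"
proof -
  define D where "D = U - B"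
  have finB: "finite B" using U B finite_subset by blast
  have eq: "{T\<in>Pow U. B \<subseteq> T} = (\<lambda>R. B \<union> R) ` Pow D"
  proof
    show "{T\<in>Pow U. B \<subseteq> T} \<subseteq> (\<lambda>R. B \<union> R) ` Pow D"
    proof
      fix T assume "T \<in> {T\<in>Pow U. B \<subseteq> T}"
      then have "T = B \<union> (T - B)" "T - B \<in> Pow D" by (auto simp: D_def)
      then show "T \<in> (\<lambda>R. B \<union> R) ` Pow D" by blast
    qed
  qed (use B in \<open>auto simp: D_def\<close>)
  have inj: "inj_on (\<lambda>R. B \<union> R) (Pow D)" unfolding inj_on_def D_def by blast
  have "(\<Sum>T\<in>{T\<in>Pow U. B \<subseteq> T}. (-1::'a) ^ card T) = (\<Sum>R\<in>Pow D. (-1::'a) ^ card (B \<union> R))"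
    unfolding eq by (rule sum.reindex[OF inj, unfolded comp_def])
  also have "\<dots> = (\<Sum>R\<in>Pow D. (-1) ^ card B * (-1::'a) ^ card R)"
  proof (rule sum.cong[OF refl])
    fix R assume "R \<in> Pow D"
    then have "finite R" "B \<inter> R = {}" using U finite_subset by (auto simp: D_def)
    then show "(-1::'a) ^ card (B \<union> R) = (-1) ^ card B * (-1) ^ card R"
      using finB by (simp add: card_Un_disjoint power_add)
  qed
  also have "\<dots> = (-1) ^ card B * (if D = {} then 1 else 0)"
    using U by (simp add: sum_distrib_left[symmetric] alt_sum_pow D_def)
  also have "\<dots> = (if B = U then (-1) ^ card U else 0)" using B by (auto simp: D_def)
  finally show ?thesis .
qed

definition mlin :: "('k::real_normed_field \<Rightarrow> 'e \<Rightarrow> 'e) \<Rightarrow> nat \<Rightarrow> ('e::real_normed_vector list \<Rightarrow> 'k) \<Rightarrow> bool" where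
  "mlin smul n A \<longleftrightarrow>
     (\<forall>xs i a b. length xs = n \<longrightarrow> i < n \<longrightarrow> A (xs[i := a + b]) = A (xs[i := a]) + A (xs[i := b])) \<and>
     (\<forall>xs i a c. length xs = n \<longrightarrow> i < n \<longrightarrow> A (xs[i := smul c a]) = c * A (xs[i := a]))"

lemma mlin_iff: "multilinear_map (Espace smul) Kspace n A \<longleftrightarrow> mlin smul n A"
  unfolding multilinear_map_def mlin_def Espace_def Kspace_def by auto

definition pol :: "('e::real_normed_vector \<Rightarrow> 'k::real_normed_field) \<Rightarrow> 'e list \<Rightarrow> 'k" where
  "pol q xs = (\<Sum>T\<in>Pow {..<length xs}. (-1) ^ (length xs + card T) * q (\<Sum>i\<in>T. xs ! i)) / fact (length xs)"

lemma pol_add: "pol (\<lambda>z. q1 z + q2 z) xs = pol q1 xs + pol q2 xs"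
  by (simp add: pol_def algebra_simps sum.distrib add_divide_distrib)

lemma pol_smul: "pol (\<lambda>z. c * q z) xs = c * pol q xs"
  by (simp add: pol_def sum_distrib_left algebra_simps)

context
  fixes smul :: "'k::{real_normed_field,banach} \<Rightarrow> 'e::banach \<Rightarrow> 'e"
  assumes S: "K_banach_scaling smul"
begin

lemma smul_zero: "smul c 0 = 0"
proof -
  have "smul c 0 = smul c (0 + 0)" by simp
  also have "\<dots> = smul c 0 + smul c 0" by (rule KBS(3)[OF S])
  finally show ?thesis by simp
qed

lemma smul_0_left: "smul 0 x = 0"
  using KBS(5)[OF S, of 0 x] by simp

lemma mlin_zero:
  assumes "mlin smul n A" "length xs = n" "i < n"
  shows "A (xs[i := 0]) = 0"
proof -
  have "A (xs[i := smul 0 0]) = 0 * A (xs[i := 0])" using assms unfolding mlin_def by blast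
  then show ?thesis by (simp add: smul_zero)
qed

lemma mlin_sum:
  assumes "mlin smul n A" "length xs = n" "i < n" "finite F"
  shows "A (xs[i := (\<Sum>j\<in>F. v j)]) = (\<Sum>j\<in>F. A (xs[i := v j]))"
  using assms(4)
proof (induction F rule: finite_induct)
  case empty then show ?case using mlin_zero[OF assms(1-3)] by simp
next
  case (insert a F)
  then show ?case using assms(1-3) unfolding mlin_def by simp
qed

lemma mlin_hom:
  assumes A: "mlin smul n A"
  shows "A (replicate n (smul c x)) = c ^ n * A (replicate n x)"
proof -
  have "A (replicate k (smul c x) @ replicate (n - k) x) = c ^ k * A (replicate n x)" if "k \<le> n" for k
    using that
  proof (induction k)
    case 0 then show ?case by simp
  next
    case (Suc k)
    define L where "L = replicate k (smul c x) @ replicate (n - k) x"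
    have len: "length L = n" using Suc by (simp add: L_def)
    obtain m where m: "n - k = Suc m" "n - Suc k = m" using Suc.prems by (metis Suc_diff_Suc Suc_le_lessD)
    have L1: "replicate (Suc k) (smul c x) @ replicate (n - Suc k) x = L[k := smul c x]"
      unfolding L_def m by (simp add: list_update_append replicate_app_Cons_same)
    have L2: "L[k := x] = L"
      unfolding L_def m by (simp add: list_update_append)
    have "A (L[k := smul c x]) = c * A (L[k := x])" using A len Suc.prems unfolding mlin_def by simp
    then show ?case using Suc L1 L2 by (simp add: L_def)
  qed
  from this[of n] show ?thesis by simp
qed

end

lemma lists_snoc_image:
  "{fs. set fs \<subseteq> T \<and> length fs = Suc k} = (\<lambda>(fs, i). fs @ [i]) ` ({fs. set fs \<subseteq> T \<and> length fs = k} \<times> T)"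
proof
  show "{fs. set fs \<subseteq> T \<and> length fs = Suc k} \<subseteq> (\<lambda>(fs, i). fs @ [i]) ` ({fs. set fs \<subseteq> T \<and> length fs = k} \<times> T)"
  proof
    fix fs assume fs: "fs \<in> {fs. set fs \<subseteq> T \<and> length fs = Suc k}"
    then have "fs \<noteq> []" by auto
    then have "fs = butlast fs @ [last fs]" by simp
    moreover have "set (butlast fs) \<subseteq> T" "last fs \<in> T" "length (butlast fs) = k"
      using fs \<open>fs \<noteq> []\<close> by (auto dest: in_set_butlastD)
    ultimately show "fs \<in> (\<lambda>(fs, i). fs @ [i]) ` ({fs. set fs \<subseteq> T \<and> length fs = k} \<times> T)"
      by (intro image_eqI[of _ _ "(butlast fs, last fs)"]) auto
  qed
qed auto

lemma inj_snoc: "inj_on (\<lambda>(fs, i). fs @ [i]) X"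
  by (auto simp: inj_on_def)

context
  fixes smul :: "'k::{real_normed_field,banach} \<Rightarrow> 'e::banach \<Rightarrow> 'e"
  assumes S: "K_banach_scaling smul"
begin

lemma mlin_expand:
  assumes A: "mlin smul n A" and T: "finite T"
  shows "A (replicate n (\<Sum>i\<in>T. x i)) = (\<Sum>fs\<in>{fs. set fs \<subseteq> T \<and> length fs = n}. A (map x fs))"
proof -
  define s where "s = (\<Sum>i\<in>T. x i)"
  define L where "L k = {fs. set fs \<subseteq> T \<and> length fs = k}" for k
  have finL: "finite (L k)" for k unfolding L_def using T by (rule finite_lists_length_eq)
  have "A (replicate n s) = (\<Sum>fs\<in>L k. A (map x fs @ replicate (n - k) s))" if "k \<le> n" for k
    using that
  proof (induction k)
    case 0
    have "L 0 = {[]}" by (auto simp: L_def)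
    then show ?case by simp
  next
    case (Suc k)
    obtain m where m: "n - k = Suc m" "n - Suc k = m" using Suc.prems by (metis Suc_diff_Suc Suc_le_lessD)
    have step: "A (map x fs @ replicate (n - k) s) = (\<Sum>i\<in>T. A (map x (fs @ [i]) @ replicate m s))"
      if fs: "fs \<in> L k" for fs
    proof -
      define W where "W = map x fs @ s # replicate m s"
      have lenW: "length W = n" "length fs = k" using fs Suc.prems m by (auto simp: W_def L_def)
      have eqs: "W[k := x i] = map x (fs @ [i]) @ replicate m s" for i
        using lenW by (simp add: W_def list_update_append)
      have "W = W[k := s]" using lenW by (simp add: W_def list_update_append)
      also have "A (W[k := s]) = (\<Sum>i\<in>T. A (W[k := x i]))"
        unfolding s_def using lenW Suc.prems by (intro mlin_sum[OF S A _ _ T]) auto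
      also have "\<dots> = (\<Sum>i\<in>T. A (map x (fs @ [i]) @ replicate m s))" by (simp only: eqs)
      finally show ?thesis by (simp add: W_def m)
    qed
    have "A (replicate n s) = (\<Sum>fs\<in>L k. \<Sum>i\<in>T. A (map x (fs @ [i]) @ replicate m s))"
      using Suc step by simp
    also have "\<dots> = (\<Sum>p\<in>L k \<times> T. A (map x (fst p @ [snd p]) @ replicate m s))"
      by (simp add: sum.cartesian_product case_prod_unfold)
    also have "\<dots> = (\<Sum>fs\<in>L (Suc k). A (map x fs @ replicate m s))"
    proof (rule sum.reindex_cong[OF inj_snoc, symmetric])
      show "L (Suc k) = (\<lambda>(fs, i). fs @ [i]) ` (L k \<times> T)" unfolding L_def by (rule lists_snoc_image)
    qed (auto split: prod.split)
    finally show ?case by (simp add: m)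
  qed
  from this[of n] show ?thesis by (simp add: s_def L_def)
qed

lemma pol_perm:
  assumes A: "mlin smul n A" and q: "\<And>x. q x = A (replicate n x)" and len: "length xs = n"
  shows "pol q xs = (\<Sum>fs\<in>permutations_of_set {..<n}. A (map (\<lambda>i. xs ! i) fs)) / fact n"
proof -
  define U where "U = {..<n}"
  define L where "L T = {fs. set fs \<subseteq> T \<and> length fs = n}" for T :: "nat set"
  define x where "x i = xs ! i" for i
  have finU: "finite U" by (simp add: U_def)
  have finL: "finite (L T)" if "finite T" for T unfolding L_def using that by (rule finite_lists_length_eq)
  have LT: "L T = {fs\<in>L U. set fs \<subseteq> T}" if "T \<subseteq> U" for T using that by (auto simp: L_def)
  have "(\<Sum>T\<in>Pow U. (-1) ^ (n + card T) * q (\<Sum>i\<in>T. x i))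
      = (\<Sum>T\<in>Pow U. \<Sum>fs\<in>{fs\<in>L U. set fs \<subseteq> T}. (-1) ^ (n + card T) * A (map x fs))"
  proof (rule sum.cong[OF refl])
    fix T assume T: "T \<in> Pow U"
    then have "finite T" using finU finite_subset by auto
    then have "q (\<Sum>i\<in>T. x i) = (\<Sum>fs\<in>L T. A (map x fs))"
      unfolding q L_def by (rule mlin_expand[OF A])
    then show "(-1) ^ (n + card T) * q (\<Sum>i\<in>T. x i) = (\<Sum>fs\<in>{fs\<in>L U. set fs \<subseteq> T}. (-1) ^ (n + card T) * A (map x fs))"
      using LT[of T] T by (simp add: sum_distrib_left)
  qed
  also have "\<dots> = (\<Sum>fs\<in>L U. \<Sum>T\<in>{T\<in>Pow U. set fs \<subseteq> T}. (-1) ^ (n + card T) * A (map x fs))"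
    by (rule sum.swap_restrict) (use finU finL in auto)
  also have "\<dots> = (\<Sum>fs\<in>L U. (if set fs = U then 1 else 0) * A (map x fs))"
  proof (rule sum.cong[OF refl])
    fix fs assume fs: "fs \<in> L U"
    have "(\<Sum>T\<in>{T\<in>Pow U. set fs \<subseteq> T}. (-1) ^ (n + card T) * A (map x fs))
        = (-1) ^ n * (\<Sum>T\<in>{T\<in>Pow U. set fs \<subseteq> T}. (-1) ^ card T) * A (map x fs)"
      by (simp add: sum_distrib_left sum_distrib_right power_add mult.assoc)
    also have "\<dots> = (-1) ^ n * (if set fs = U then (-1) ^ card U else 0) * A (map x fs)"
      using fs by (subst incl_excl[OF finU]) (auto simp: L_def)
    also have "\<dots> = (if set fs = U then 1 else 0) * A (map x fs)"
      by (simp add: U_def power_add[symmetric] flip: power_mult mult_2)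
    finally show "(\<Sum>T\<in>{T\<in>Pow U. set fs \<subseteq> T}. (-1) ^ (n + card T) * A (map x fs))
        = (if set fs = U then 1 else 0) * A (map x fs)" .
  qed
  also have "\<dots> = (\<Sum>fs\<in>L U. if set fs = U then A (map x fs) else 0)"
    by (rule sum.cong) auto
  also have "\<dots> = (\<Sum>fs\<in>{fs\<in>L U. set fs = U}. A (map x fs))"
    by (rule sum.inter_filter[symmetric]) (rule finL[OF finU])
  also have "{fs\<in>L U. set fs = U} = permutations_of_set U"
  proof -
    have dist: "distinct fs" if "set fs = U" "length fs = n" for fs
      using that by (intro card_distinct) (simp add: U_def)
    show ?thesis
    proof (intro set_eqI iffI)
      fix fs assume "fs \<in> {fs\<in>L U. set fs = U}"
      then show "fs \<in> permutations_of_set U" using dist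
        by (auto simp: L_def permutations_of_set_def)
    next
      fix fs assume "fs \<in> permutations_of_set U"
      then have "set fs = U" "distinct fs" by (auto simp: permutations_of_set_def)
      then have "length fs = n" using distinct_card[of fs] by (simp add: U_def)
      then show "fs \<in> {fs\<in>L U. set fs = U}" using \<open>set fs = U\<close> by (auto simp: L_def)
    qed
  qed
  finally show ?thesis by (simp add: pol_def len U_def x_def)
qed

lemma pol_diag:
  assumes A: "mlin smul n A" and q: "\<And>x. q x = A (replicate n x)"
  shows "pol q (replicate n x) = q x"
proof -
  have "map (\<lambda>i. replicate n x ! i) fs = replicate n x" if fs: "fs \<in> permutations_of_set {..<n}" for fs
  proof -
    have "set fs = {..<n}" "distinct fs" using fs by (auto simp: permutations_of_set_def)
    then have len: "length fs = n" using distinct_card[of fs] by simp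
    have "\<forall>i\<in>set fs. i < n" using fs by (auto simp: permutations_of_set_def)
    then have "map (\<lambda>i. replicate n x ! i) fs = map (\<lambda>i. x) fs" by (intro map_cong) auto
    also have "\<dots> = replicate n x" using len by (simp add: map_replicate_const)
    finally show ?thesis .
  qed
  then have "pol q (replicate n x) = (\<Sum>fs\<in>permutations_of_set {..<n}. A (replicate n x)) / fact n"
    by (simp add: pol_perm[OF A q])
  also have "\<dots> = A (replicate n x)" by simp
  finally show ?thesis by (simp add: q)
qed

end

lemma map_update_perm:
  assumes "distinct fs" "p < length fs" "fs ! p = i" "i < length xs"
  shows "map (\<lambda>k. (xs[i := v]) ! k) fs = (map (\<lambda>k. xs ! k) fs)[p := v]"
proof (rule nth_equalityI)
  show "length (map (\<lambda>k. xs[i := v] ! k) fs) = length ((map (\<lambda>k. xs ! k) fs)[p := v])" by simp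
  fix r assume r: "r < length (map (\<lambda>k. xs[i := v] ! k) fs)"
  then have r': "r < length fs" by simp
  have "fs ! r = i \<longleftrightarrow> r = p" using assms r' nth_eq_iff_index_eq by metis
  then show "map (\<lambda>k. xs[i := v] ! k) fs ! r = (map (\<lambda>k. xs ! k) fs)[p := v] ! r"
    using r' assms by (auto simp: nth_list_update)
qed

lemma hom_poly_iff: "hom_poly (Espace smul) Kspace n q \<longleftrightarrow> (\<exists>A. mlin smul n A \<and> (\<forall>x. q x = A (replicate n x)))"
  unfolding hom_poly_def mlin_iff by (simp add: Espace_def)

context
  fixes smul :: "'k::{real_normed_field,banach} \<Rightarrow> 'e::banach \<Rightarrow> 'e"
  assumes S: "K_banach_scaling smul"
begin

lemma pol_mlin:
  assumes A: "mlin smul n A" and q: "\<And>x. q x = A (replicate n x)"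
  shows "mlin smul n (pol q)"
proof -
  define P where "P = permutations_of_set {..<n}"
  define t where "t fs xs = A (map (\<lambda>k. xs ! k) fs)" for fs xs
  have pq: "pol q xs = (\<Sum>fs\<in>P. t fs xs) / fact n" if "length xs = n" for xs
    using pol_perm[OF S A q that] by (simp add: P_def t_def)
  have upd: "\<exists>p<n. (\<forall>v. map (\<lambda>k. (xs[i := v]) ! k) fs = (map (\<lambda>k. xs ! k) fs)[p := v])
      \<and> length (map (\<lambda>k. xs ! k) fs) = n"
    if fs: "fs \<in> P" and xs: "length xs = n" "i < n" for fs xs i
  proof -
    have "set fs = {..<n}" "distinct fs" using fs by (auto simp: P_def permutations_of_set_def)
    then have len: "length fs = n" using distinct_card[of fs] by simp
    have "i \<in> set fs" using \<open>set fs = {..<n}\<close> xs by simp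
    then obtain p where p: "p < length fs" "fs ! p = i" by (auto simp: in_set_conv_nth)
    show ?thesis using map_update_perm[OF \<open>distinct fs\<close> p] xs p len by (intro exI[of _ p]) auto
  qed
  have tadd: "t fs (xs[i := a + b]) = t fs (xs[i := a]) + t fs (xs[i := b])"
    if tp: "fs \<in> P" "length xs = n" "i < n" for fs xs i a b
  proof -
    obtain p where "p < n" and u: "\<And>v. map (\<lambda>k. (xs[i := v]) ! k) fs = (map (\<lambda>k. xs ! k) fs)[p := v]"
      and l: "length (map (\<lambda>k. xs ! k) fs) = n"
      using upd[OF tp] by blast
    show ?thesis unfolding t_def u using A l \<open>p < n\<close> unfolding mlin_def by blast
  qed
  have tsc: "t fs (xs[i := smul c a]) = c * t fs (xs[i := a])"
    if tp: "fs \<in> P" "length xs = n" "i < n" for fs xs i a c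
  proof -
    obtain p where "p < n" and u: "\<And>v. map (\<lambda>k. (xs[i := v]) ! k) fs = (map (\<lambda>k. xs ! k) fs)[p := v]"
      and l: "length (map (\<lambda>k. xs ! k) fs) = n"
      using upd[OF tp] by blast
    show ?thesis unfolding t_def u using A l \<open>p < n\<close> unfolding mlin_def by blast
  qed
  show ?thesis unfolding mlin_def
  proof (intro conjI allI impI)
    fix xs :: "'e list" and i a b assume xs: "length xs = n" "i < n"
    show "pol q (xs[i := a + b]) = pol q (xs[i := a]) + pol q (xs[i := b])"
      using xs by (simp add: pq tadd sum.distrib add_divide_distrib)
  next
    fix xs :: "'e list" and i a c assume xs: "length xs = n" "i < n"
    show "pol q (xs[i := smul c a]) = c * pol q (xs[i := a])"
      using xs by (simp add: pq tsc sum_distrib_left)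
  qed
qed

lemma hom_pol:
  assumes "hom_poly (Espace smul) Kspace n q"
  shows "mlin smul n (pol q)" "pol q (replicate n x) = q x"
proof -
  obtain A where A: "mlin smul n A" "\<And>x. q x = A (replicate n x)" using assms hom_poly_iff by blast
  show "mlin smul n (pol q)" by (rule pol_mlin[OF A])
  show "pol q (replicate n x) = q x" by (rule pol_diag[OF S A])
qed

end

lemma prod_diff_bound:
  fixes a b :: "nat \<Rightarrow> 'k::real_normed_field"
  assumes "\<And>k. k < m \<Longrightarrow> norm (a k) \<le> R" "\<And>k. k < m \<Longrightarrow> norm (b k) \<le> R"
    "\<And>k. k < m \<Longrightarrow> norm (a k - b k) \<le> D"
  shows "norm ((\<Prod>k<m. a k) - (\<Prod>k<m. b k)) \<le> real m * R ^ (m - 1) * D"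
  using assms
proof (induction m)
  case 0 then show ?case by simp
next
  case (Suc m)
  have R0: "0 \<le> R" using Suc.prems(1)[of 0] norm_ge_zero[of "a 0"] by linarith
  have IH: "norm ((\<Prod>k<m. a k) - (\<Prod>k<m. b k)) \<le> real m * R ^ (m - 1) * D"
    using Suc by simp
  have pa: "norm (\<Prod>k<m. a k) \<le> R ^ m"
  proof -
    have "norm (\<Prod>k<m. a k) = (\<Prod>k<m. norm (a k))" by (simp add: prod_norm)
    also have "\<dots> \<le> (\<Prod>k<m. R)" by (rule prod_mono) (use Suc.prems(1) in auto)
    finally show ?thesis by simp
  qed
  have D0: "0 \<le> D" using Suc.prems(3)[of 0] norm_ge_zero[of "a 0 - b 0"] by linarith
  have "(\<Prod>k<Suc m. a k) - (\<Prod>k<Suc m. b k)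
      = (\<Prod>k<m. a k) * (a m - b m) + ((\<Prod>k<m. a k) - (\<Prod>k<m. b k)) * b m"
    by (simp add: algebra_simps)
  then have "norm ((\<Prod>k<Suc m. a k) - (\<Prod>k<Suc m. b k))
      \<le> norm (\<Prod>k<m. a k) * norm (a m - b m) + norm ((\<Prod>k<m. a k) - (\<Prod>k<m. b k)) * norm (b m)"
    by (metis norm_mult norm_triangle_ineq)
  also have "\<dots> \<le> R ^ m * D + (real m * R ^ (m - 1) * D) * R"
    using pa IH Suc.prems R0 D0 by (intro add_mono mult_mono) auto
  also have "\<dots> = real (Suc m) * R ^ (Suc m - 1) * D"
    by (cases m) (auto simp: algebra_simps)
  finally show ?case .
qed

definition Pc :: "('k::real_normed_field \<Rightarrow> 'e \<Rightarrow> 'e) \<Rightarrow> nat \<Rightarrow> ('e::banach \<Rightarrow> 'k) set" where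
  "Pc smul n = spc_carrier (Pspace (Espace smul) n)"

definition econt :: "('e::real_normed_vector \<Rightarrow> 'k::real_normed_field) \<Rightarrow> bool" where
  "econt q \<longleftrightarrow> (\<forall>x e. 0 < e \<longrightarrow> (\<exists>d>0. \<forall>y. norm (y - x) < d \<longrightarrow> norm (q y - q x) < e))"

definition pn :: "('e::real_normed_vector \<Rightarrow> 'k::real_normed_field) \<Rightarrow> real" where
  "pn q = Sup {norm (q x) | x. norm x \<le> 1}"

definition hb :: "('e::real_normed_vector \<Rightarrow> 'k::real_normed_field) \<Rightarrow> nat \<Rightarrow> real \<Rightarrow> bool" where
  "hb q n B \<longleftrightarrow> (\<forall>y. norm (q y) \<le> B * norm y ^ n)"

lemma poly_norm_E: "poly_norm (Espace smul) q = pn q"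
  by (simp add: poly_norm_def pn_def Espace_def)

lemma hom_bound:
  fixes q :: "'e::real_normed_vector \<Rightarrow> 'k::real_normed_field"
  assumes hom: "\<And>r y. q (r *\<^sub>R y) = of_real r ^ n * q y" and B: "\<And>u. norm u \<le> 1 \<Longrightarrow> norm (q u) \<le> B"
  shows "hb q n B"
  unfolding hb_def
proof
  fix y :: 'e
  show "norm (q y) \<le> B * norm y ^ n"
  proof (cases "y = 0")
    case True
    show ?thesis
    proof (cases n)
      case 0 then show ?thesis using B[of 0] True by simp
    next
      case (Suc k)
      have "q 0 = q (0 *\<^sub>R 0)" by simp
      also have "\<dots> = 0" by (simp only: hom) (simp add: Suc)
      finally show ?thesis using True Suc by simp
    qed
  next
    case False
    define u where "u = (1 / norm y) *\<^sub>R y"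
    have nu: "norm u = 1" using False by (simp add: u_def)
    have "y = norm y *\<^sub>R u" using False by (simp add: u_def)
    then have "q y = of_real (norm y) ^ n * q u" by (metis hom)
    then have "norm (q y) = norm y ^ n * norm (q u)" by (simp add: norm_mult norm_power)
    also have "\<dots> \<le> norm y ^ n * B" using B[of u] nu by (intro mult_left_mono) auto
    finally show ?thesis by (simp add: mult.commute)
  qed
qed

lemma pol_bound:
  fixes q :: "'e::real_normed_vector \<Rightarrow> 'k::real_normed_field"
  assumes "hb q n B" "0 \<le> B" "length zs = n"
  shows "norm (pol q zs) \<le> 2 ^ n * B * (\<Sum>i<n. norm (zs ! i)) ^ n"
proof -
  define R where "R = (\<Sum>i<n. norm (zs ! i))"
  have R0: "0 \<le> R" by (simp add: R_def sum_nonneg)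
  have each: "norm ((-1) ^ (n + card T) * q (\<Sum>i\<in>T. zs ! i)) \<le> B * R ^ n" if "T \<in> Pow {..<n}" for T
  proof -
    have "norm (\<Sum>i\<in>T. zs ! i) \<le> (\<Sum>i\<in>T. norm (zs ! i))" by (rule norm_sum)
    also have "\<dots> \<le> R" unfolding R_def using that by (intro sum_mono2) auto
    finally have "norm (\<Sum>i\<in>T. zs ! i) ^ n \<le> R ^ n" by (intro power_mono) auto
    then have "norm (q (\<Sum>i\<in>T. zs ! i)) \<le> B * R ^ n"
      using assms(1,2) unfolding hb_def by (meson mult_left_mono order.trans)
    then show ?thesis by (simp add: norm_mult norm_power)
  qed
  have "norm (pol q zs) \<le> norm (\<Sum>T\<in>Pow {..<n}. (-1) ^ (n + card T) * q (\<Sum>i\<in>T. zs ! i))"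
  proof -
    have "norm (pol q zs) = norm (\<Sum>T\<in>Pow {..<n}. (-1) ^ (n + card T) * q (\<Sum>i\<in>T. zs ! i)) / fact n"
      unfolding pol_def assms(3) by (simp add: norm_divide)
    also have "\<dots> \<le> norm (\<Sum>T\<in>Pow {..<n}. (-1) ^ (n + card T) * q (\<Sum>i\<in>T. zs ! i)) / 1"
      by (intro divide_left_mono) auto
    finally show ?thesis by simp
  qed
  also have "\<dots> \<le> (\<Sum>T\<in>Pow {..<n}. B * R ^ n)" by (rule order.trans[OF norm_sum sum_mono[OF each]])
  also have "\<dots> = 2 ^ n * B * R ^ n" by (simp add: card_Pow)
  finally show ?thesis by (simp add: R_def)
qed

context
  fixes smul :: "'k::{real_normed_field,banach} \<Rightarrow> 'e::banach \<Rightarrow> 'e"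
  assumes S: "K_banach_scaling smul"
begin

lemma smul_m1: "smul (-1) x = - x"
  using KBS(5)[OF S, of "-1" x] by simp

lemma Pc_iff: "q \<in> Pc smul n \<longleftrightarrow> hom_poly (Espace smul) Kspace n q \<and> econt q"
  by (simp add: Pc_def Pspace_def cont_hom_poly_def spc_continuous_def econt_def Espace_def Kspace_def
      spc_diff_def smul_m1)

lemma Pc_hom:
  assumes "hom_poly (Espace smul) Kspace n q"
  shows "q (smul c x) = c ^ n * q x" "q (r *\<^sub>R x) = of_real r ^ n * q x"
proof -
  show "q (smul c x) = c ^ n * q x" for c x
    using mlin_hom[OF S hom_pol(1)[OF S assms], of c x] hom_pol(2)[OF S assms] by simp
  from this[of "of_real r" x] show "q (r *\<^sub>R x) = of_real r ^ n * q x" by (simp add: KBS(5)[OF S])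
qed

lemma Pc_ball_bounded:
  assumes "q \<in> Pc smul n"
  shows "\<exists>K. \<forall>u. norm u \<le> 1 \<longrightarrow> norm (q u) \<le> K"
proof -
  have hp: "hom_poly (Espace smul) Kspace n q" and ec: "econt q" using assms Pc_iff by auto
  obtain d where d: "d > 0" "\<And>y. norm (y - 0) < d \<Longrightarrow> norm (q y - q 0) < 1"
    using ec unfolding econt_def by (metis zero_less_one)
  show ?thesis
  proof (intro exI allI impI)
    fix u :: 'e assume u: "norm u \<le> 1"
    define v where "v = (d / 2) *\<^sub>R u"
    have "norm v < d" using u d by (simp add: v_def)
    then have "norm (q v) < norm (q 0) + 1" using d(2)[of v] norm_triangle_ineq2[of "q v" "q 0"] by simp
    have "u = (2 / d) *\<^sub>R v" using d by (simp add: v_def)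
    then have "q u = of_real (2 / d) ^ n * q v" using Pc_hom(2)[OF hp] by metis
    then have "norm (q u) = norm (of_real (2 / d) :: 'k) ^ n * norm (q v)" by (simp only: norm_mult norm_power)
    then have "norm (q u) = (2 / d) ^ n * norm (q v)" using d by (simp only: norm_of_real) simp
    also have "\<dots> \<le> (2 / d) ^ n * (norm (q 0) + 1)"
      using \<open>norm (q v) < norm (q 0) + 1\<close> d by (intro mult_left_mono) auto
    finally show "norm (q u) \<le> (2 / d) ^ n * (norm (q 0) + 1)" .
  qed
qed

lemma bdd_ball:
  assumes "\<And>u. norm u \<le> 1 \<Longrightarrow> norm (q u) \<le> K"
  shows "bdd_above {norm (q x) | x. norm x \<le> 1}"
  using assms unfolding bdd_above_def by blast

lemma pn_upper:
  assumes "bdd_above {norm (q x) | x. norm x \<le> 1}" "norm u \<le> 1"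
  shows "norm (q u) \<le> pn q"
  unfolding pn_def using assms by (intro cSup_upper) auto

lemma pn_nonneg:
  assumes "bdd_above {norm (q x) | x. norm x \<le> 1}"
  shows "0 \<le> pn (q :: 'e \<Rightarrow> 'k)"
  using order.trans[OF norm_ge_zero pn_upper[OF assms, of 0]] by simp

lemma Pc_hb:
  assumes "q \<in> Pc smul n"
  shows "hb q n (pn q)" "0 \<le> pn q" "bdd_above {norm (q x) | x. norm x \<le> 1}"
proof -
  obtain K where K: "\<And>u. norm u \<le> 1 \<Longrightarrow> norm (q u) \<le> K" using Pc_ball_bounded[OF assms] by blast
  show bdd: "bdd_above {norm (q x) | x. norm x \<le> 1}" by (rule bdd_ball[OF K])
  have hp: "hom_poly (Espace smul) Kspace n q" using assms Pc_iff by auto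
  show "hb q n (pn q)" by (rule hom_bound[OF Pc_hom(2)[OF hp] pn_upper[OF bdd]])
  show "0 \<le> pn q" by (rule pn_nonneg[OF bdd])
qed

end

context
  fixes smul :: "'k::{real_normed_field,banach} \<Rightarrow> 'e::banach \<Rightarrow> 'e"
  assumes S: "K_banach_scaling smul"
begin

lemma mlin_diff_bound:
  assumes A: "mlin smul n A" and R: "1 \<le> R" "norm x \<le> R" "norm y \<le> R"
    and K: "\<And>zs. length zs = n \<Longrightarrow> (\<And>i. i < n \<Longrightarrow> norm (zs ! i) \<le> R) \<Longrightarrow> norm (A zs) \<le> K"
  shows "norm (A (replicate n y) - A (replicate n x)) \<le> real n * K * norm (y - x)"
proof -
  define Z where "Z k = replicate k y @ replicate (n - k) x" for k
  have step: "norm (A (Z (Suc k)) - A (Z k)) \<le> K * norm (y - x)" if k: "k < n" for k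
  proof -
    obtain m where m: "n - k = Suc m" "n - Suc k = m" using k by (metis Suc_diff_Suc)
    have lenZ: "length (Z k) = n" using k by (simp add: Z_def)
    have Z1: "Z (Suc k) = (Z k)[k := y]"
      unfolding Z_def m by (simp add: list_update_append replicate_app_Cons_same)
    have Z2: "Z k = (Z k)[k := x]" unfolding Z_def m by (simp add: list_update_append)
    have nk: "n = k + Suc m" using m k by simp
    have ent: "norm (((Z k)[k := v]) ! i) \<le> R" if "i < n" "norm v \<le> R" for i v
    proof -
      have "i - Suc k < m" if "\<not> i < k" "k \<noteq> i" using \<open>i < n\<close> nk that by linarith
      then show ?thesis using that k R unfolding Z_def m by (auto simp: nth_list_update nth_append)
    qed
    have "A ((Z k)[k := x + (y - x)]) = A ((Z k)[k := x]) + A ((Z k)[k := y - x])"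
      using A lenZ k unfolding mlin_def by blast
    then have eq: "A (Z (Suc k)) - A (Z k) = A ((Z k)[k := y - x])" using Z1 Z2 by simp
    show ?thesis
    proof (cases "y = x")
      case True
      then show ?thesis using eq mlin_zero[OF S A lenZ k] by simp
    next
      case False
      define t where "t = norm (y - x)"
      define u where "u = (1 / t) *\<^sub>R (y - x)"
      have t: "t > 0" using False by (simp add: t_def)
      have nu: "norm u = 1" using t by (simp add: u_def t_def)
      have "y - x = smul (of_real t) u" using t by (simp add: KBS(5)[OF S] u_def)
      then have "A ((Z k)[k := y - x]) = of_real t * A ((Z k)[k := u])"
        using A lenZ k unfolding mlin_def by simp
      moreover have "norm (A ((Z k)[k := u])) \<le> K"
        using K[of "(Z k)[k := u]"] lenZ ent[of _ u] nu R by simp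
      ultimately have "norm (A ((Z k)[k := y - x])) \<le> t * K"
        using t by (simp add: norm_mult mult_left_mono)
      then show ?thesis using eq by (simp add: t_def mult.commute)
    qed
  qed
  have "A (replicate n y) - A (replicate n x) = (\<Sum>k<n. A (Z (Suc k)) - A (Z k))"
    by (subst sum_lessThan_telescope) (simp add: Z_def)
  also have "norm \<dots> \<le> (\<Sum>k<n. K * norm (y - x))"
    by (rule order.trans[OF norm_sum sum_mono]) (use step in auto)
  finally show ?thesis by simp
qed

lemma q_lip:
  assumes q: "q \<in> Pc smul n" and pq: "pn q \<le> 1" and R: "1 \<le> R" "norm x \<le> R" "norm y \<le> R"
  shows "norm (q y - q x) \<le> real n * (2 ^ n * (real n * R) ^ n) * norm (y - x)"
proof -
  have hp: "hom_poly (Espace smul) Kspace n q" using q Pc_iff[OF S] by auto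
  have hbq: "hb q n (pn q)" "0 \<le> pn q" using Pc_hb[OF S q] by auto
  have "norm (pol q (replicate n y) - pol q (replicate n x)) \<le> real n * (2 ^ n * (real n * R) ^ n) * norm (y - x)"
  proof (rule mlin_diff_bound[OF hom_pol(1)[OF S hp] R])
    fix zs :: "'e list" assume zs: "length zs = n" "\<And>i. i < n \<Longrightarrow> norm (zs ! i) \<le> R"
    have "(\<Sum>i<n. norm (zs ! i)) \<le> (\<Sum>i<n. R)" using zs by (intro sum_mono) auto
    then have s: "(\<Sum>i<n. norm (zs ! i)) ^ n \<le> (real n * R) ^ n"
      by (intro power_mono) (auto simp: sum_nonneg)
    have "norm (pol q zs) \<le> 2 ^ n * pn q * (\<Sum>i<n. norm (zs ! i)) ^ n" by (rule pol_bound[OF hbq zs(1)])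
    also have "\<dots> \<le> 2 ^ n * 1 * (real n * R) ^ n"
      using hbq pq s by (intro mult_mono) (auto simp: sum_nonneg)
    finally show "norm (pol q zs) \<le> 2 ^ n * (real n * R) ^ n" by simp
  qed
  then show ?thesis using hom_pol(2)[OF S hp] by simp
qed

lemma q_val_bound:
  assumes q: "q \<in> Pc smul n" and pq: "pn q \<le> 1"
  shows "norm (q x) \<le> norm x ^ n"
proof -
  have "norm (q x) \<le> pn q * norm x ^ n" using Pc_hb[OF S q] unfolding hb_def by blast
  also have "\<dots> \<le> 1 * norm x ^ n" using pq by (intro mult_right_mono) auto
  finally show ?thesis by simp
qed

end

definition chunk :: "nat \<Rightarrow> nat \<Rightarrow> 'a list \<Rightarrow> 'a list" where
  "chunk n k xs = take n (drop (k * n) xs)"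

lemma chunk_len: "length xs = m * n \<Longrightarrow> k < m \<Longrightarrow> length (chunk n k xs) = n"
proof -
  assume "length xs = m * n" "k < m"
  moreover have "k * n + n \<le> m * n" using \<open>k < m\<close> by (metis add.commute mult_Suc less_eq_Suc_le mult_le_mono1)
  ultimately show ?thesis by (simp add: chunk_def)
qed

lemma chunk_rep: "k < m \<Longrightarrow> chunk n k (replicate (m * n) x) = replicate n x"
proof -
  assume "k < m"
  then have "k * n + n \<le> m * n" by (metis add.commute mult_Suc less_eq_Suc_le mult_le_mono1)
  then show ?thesis by (simp add: chunk_def min_def)
qed

lemma chunk_nth: "length xs = m * n \<Longrightarrow> k < m \<Longrightarrow> j < n \<Longrightarrow> chunk n k xs ! j = xs ! (k * n + j)"
  by (simp add: chunk_def add.commute)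

lemma chunk_upd:
  assumes len: "length xs = m * n" and i: "i < m * n" and k: "k < m"
  shows "chunk n k (xs[i := v]) = (if k = i div n then (chunk n k xs)[i mod n := v] else chunk n k xs)"
proof -
  have n: "n > 0" using i by (cases n) auto
  define k0 where "k0 = i div n"
  define r where "r = i mod n"
  have ir: "i = k0 * n + r" "r < n" using n by (auto simp: k0_def r_def)
  consider "k = k0" | "k < k0" | "k > k0" by linarith
  then show ?thesis
  proof cases
    case 1
    have "drop (k * n) (xs[i := v]) = (drop (k * n) xs)[r := v]"
      using ir 1 by (simp add: drop_update_swap)
    then show ?thesis using 1 by (simp add: chunk_def take_update_swap k0_def r_def)
  next
    case 2
    then have "k * n + n \<le> k0 * n" by (metis add.commute mult_Suc less_eq_Suc_le mult_le_mono1)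
    then have le: "k * n \<le> i" "n \<le> i - k * n" using ir by auto
    have "drop (k * n) (xs[i := v]) = (drop (k * n) xs)[i - k * n := v]"
      using le by (simp add: drop_update_swap)
    then have "chunk n k (xs[i := v]) = (chunk n k xs)[i - k * n := v]" by (simp add: chunk_def take_update_swap)
    also have "\<dots> = chunk n k xs" using le len k by (intro list_update_beyond) (simp add: chunk_len[OF len k])
    finally show ?thesis using 2 by (simp add: k0_def)
  next
    case 3
    then have "k0 * n + n \<le> k * n" by (metis add.commute mult_Suc less_eq_Suc_le mult_le_mono1)
    then have "i < k * n" using ir by linarith
    then show ?thesis using 3 by (simp add: chunk_def k0_def)
  qed
qed

definition Mrep :: "('k::real_normed_field \<Rightarrow> 'e \<Rightarrow> 'e) \<Rightarrow> nat \<Rightarrow> nat \<Rightarrow> 'e::banach list \<Rightarrow> ('e \<Rightarrow> 'k) \<Rightarrow> 'k" where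
  "Mrep smul m n xs q = (if q \<in> Pc smul n then (\<Prod>k<m. pol q (chunk n k xs)) else 0)"

lemma prod_upd_one:
  assumes "k0 < (m::nat)"
  shows "(\<Prod>k<m. f k) = f k0 * (\<Prod>k\<in>{..<m} - {k0}. (f k :: 'a::comm_monoid_mult))"
  using assms by (intro prod.remove) auto

context
  fixes smul :: "'k::{real_normed_field,banach} \<Rightarrow> 'e::banach \<Rightarrow> 'e"
  assumes S: "K_banach_scaling smul"
begin

lemma Jmap_Mrep: "Jmap smul m n x = Mrep smul m n (replicate (m * n) x)"
proof
  fix q
  show "Jmap smul m n x q = Mrep smul m n (replicate (m * n) x) q"
  proof (cases "q \<in> Pc smul n")
    case True
    then have hp: "hom_poly (Espace smul) Kspace n q" using Pc_iff[OF S] by auto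
    have "(\<Prod>k<m. pol q (chunk n k (replicate (m * n) x))) = (\<Prod>k<m. q x)"
      by (rule prod.cong) (auto simp: chunk_rep hom_pol(2)[OF S hp])
    then show ?thesis using True by (simp add: Jmap_def Mrep_def Pc_def)
  next
    case False
    then show ?thesis by (simp add: Jmap_def Mrep_def Pc_def)
  qed
qed

lemma Mrep_lin:
  assumes len: "length xs = m * n" and i: "i < m * n"
  shows "Mrep smul m n (xs[i := a + b]) = (\<lambda>q. Mrep smul m n (xs[i := a]) q + Mrep smul m n (xs[i := b]) q)"
    "Mrep smul m n (xs[i := smul c a]) = (\<lambda>q. c * Mrep smul m n (xs[i := a]) q)"
proof -
  have n: "n > 0" using i by (cases n) auto
  define k0 where "k0 = i div n"
  define r where "r = i mod n"
  have k0: "k0 < m" using i n by (simp add: k0_def less_mult_imp_div_less)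
  have r: "r < n" using n by (simp add: r_def)
  have lc: "length (chunk n k0 xs) = n" by (rule chunk_len[OF len k0])
  have split: "(\<Prod>k<m. pol q (chunk n k (xs[i := v]))) =
      pol q ((chunk n k0 xs)[r := v]) * (\<Prod>k\<in>{..<m} - {k0}. pol q (chunk n k xs))" for q v
  proof -
    have "(\<Prod>k<m. pol q (chunk n k (xs[i := v]))) =
        pol q (chunk n k0 (xs[i := v])) * (\<Prod>k\<in>{..<m} - {k0}. pol q (chunk n k (xs[i := v])))"
      by (rule prod_upd_one[OF k0])
    also have "(\<Prod>k\<in>{..<m} - {k0}. pol q (chunk n k (xs[i := v]))) = (\<Prod>k\<in>{..<m} - {k0}. pol q (chunk n k xs))"
      by (rule prod.cong) (auto simp: chunk_upd[OF len i] k0_def)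
    also have "chunk n k0 (xs[i := v]) = (chunk n k0 xs)[r := v]"
      using chunk_upd[OF len i k0] by (simp add: k0_def r_def)
    finally show ?thesis .
  qed
  show "Mrep smul m n (xs[i := a + b]) = (\<lambda>q. Mrep smul m n (xs[i := a]) q + Mrep smul m n (xs[i := b]) q)"
  proof
    fix q show "Mrep smul m n (xs[i := a + b]) q = Mrep smul m n (xs[i := a]) q + Mrep smul m n (xs[i := b]) q"
    proof (cases "q \<in> Pc smul n")
      case True
      then have hp: "hom_poly (Espace smul) Kspace n q" using Pc_iff[OF S] by auto
      have "pol q ((chunk n k0 xs)[r := a + b]) = pol q ((chunk n k0 xs)[r := a]) + pol q ((chunk n k0 xs)[r := b])"
        using hom_pol(1)[OF S hp] lc r unfolding mlin_def by blast
      then show ?thesis using True by (simp add: Mrep_def split algebra_simps)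
    qed (simp add: Mrep_def)
  qed
  show "Mrep smul m n (xs[i := smul c a]) = (\<lambda>q. c * Mrep smul m n (xs[i := a]) q)"
  proof
    fix q show "Mrep smul m n (xs[i := smul c a]) q = c * Mrep smul m n (xs[i := a]) q"
    proof (cases "q \<in> Pc smul n")
      case True
      then have hp: "hom_poly (Espace smul) Kspace n q" using Pc_iff[OF S] by auto
      have "pol q ((chunk n k0 xs)[r := smul c a]) = c * pol q ((chunk n k0 xs)[r := a])"
        using hom_pol(1)[OF S hp] lc r unfolding mlin_def by blast
      then show ?thesis using True by (simp add: Mrep_def split algebra_simps)
    qed (simp add: Mrep_def)
  qed
qed

lemma Mrep_hom: "hom_poly (Pspace (Espace smul) n) Kspace m (Mrep smul m n xs)"
  unfolding hom_poly_def
proof (intro exI conjI ballI)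
  define B where "B qs = (\<Prod>k<m. pol (qs ! k) (chunk n k xs))" for qs :: "('e \<Rightarrow> 'k) list"
  have Bupd: "B (qs[i := p]) = pol p (chunk n i xs) * (\<Prod>k\<in>{..<m} - {i}. pol (qs ! k) (chunk n k xs))"
    if "length qs = m" "i < m" for qs i p
  proof -
    have "B (qs[i := p]) = pol (qs[i := p] ! i) (chunk n i xs) * (\<Prod>k\<in>{..<m} - {i}. pol (qs[i := p] ! k) (chunk n k xs))"
      unfolding B_def by (rule prod_upd_one[OF that(2)])
    also have "(\<Prod>k\<in>{..<m} - {i}. pol (qs[i := p] ! k) (chunk n k xs)) = (\<Prod>k\<in>{..<m} - {i}. pol (qs ! k) (chunk n k xs))"
      by (rule prod.cong) auto
    finally show ?thesis using that by simp
  qed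
  show "multilinear_map (Pspace (Espace smul) n) Kspace m B"
    unfolding multilinear_map_def
  proof (intro conjI allI impI)
    fix qs :: "('e \<Rightarrow> 'k) list" and i a b c
    assume h: "set qs \<subseteq> spc_carrier (Pspace (Espace smul) n) \<and> length qs = m \<and> i < m \<and>
        a \<in> spc_carrier (Pspace (Espace smul) n) \<and> b \<in> spc_carrier (Pspace (Espace smul) n)"
    then have lq: "length qs = m" "i < m" by auto
    show "B (qs[i := spc_add (Pspace (Espace smul) n) a b]) =
        spc_add Kspace (B (qs[i := a])) (B (qs[i := b]))"
      by (simp add: Bupd[OF lq] Pspace_def Kspace_def pol_add algebra_simps)
    show "B (qs[i := spc_smul (Pspace (Espace smul) n) c a]) = spc_smul Kspace c (B (qs[i := a]))"
      by (simp add: Bupd[OF lq] Pspace_def Kspace_def pol_smul algebra_simps)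
  qed (simp add: Kspace_def)
  fix q assume "q \<in> spc_carrier (Pspace (Espace smul) n)"
  then show "Mrep smul m n xs q = B (replicate m q)" by (simp add: Mrep_def B_def Pc_def)
qed

end

context
  fixes smul :: "'k::{real_normed_field,banach} \<Rightarrow> 'e::banach \<Rightarrow> 'e"
  assumes S: "K_banach_scaling smul"
begin

lemma diff_hb:
  assumes q: "q \<in> Pc smul n" and q': "q' \<in> Pc smul n"
  defines "D \<equiv> (\<lambda>x. q' x + (-1) * q x)"
  shows "hb D n (pn D)" "0 \<le> pn D"
proof -
  have hp: "hom_poly (Espace smul) Kspace n q" "hom_poly (Espace smul) Kspace n q'"
    using q q' Pc_iff[OF S] by auto
  obtain K1 where K1: "\<And>u. norm u \<le> 1 \<Longrightarrow> norm (q u) \<le> K1" using Pc_ball_bounded[OF S q] by blast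
  obtain K2 where K2: "\<And>u. norm u \<le> 1 \<Longrightarrow> norm (q' u) \<le> K2" using Pc_ball_bounded[OF S q'] by blast
  have Db: "norm (D u) \<le> K2 + K1" if "norm u \<le> 1" for u
    using K1[OF that] K2[OF that] norm_triangle_ineq4[of "q' u" "q u"] by (simp add: D_def)
  have bdd: "bdd_above {norm (D x) | x. norm x \<le> 1}" by (rule bdd_ball[OF S Db])
  have hom: "D (r *\<^sub>R y) = of_real r ^ n * D y" for r y
    by (simp add: D_def Pc_hom(2)[OF S hp(1)] Pc_hom(2)[OF S hp(2)] algebra_simps)
  show "hb D n (pn D)" by (rule hom_bound[OF hom pn_upper[OF S bdd]])
  show "0 \<le> pn D" by (rule pn_nonneg[OF S bdd])
qed

lemma pol_diff: "pol (\<lambda>x. q' x + (-1) * q x) ys = pol q' ys - pol q ys"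
  using pol_add[of q' "\<lambda>x. (-1) * q x" ys] pol_smul[of "-1" q ys] by simp

lemma Mrep_cont:
  assumes len: "length xs = m * n"
  shows "spc_continuous (Pspace (Espace smul) n) Kspace (Mrep smul m n xs)"
  unfolding spc_continuous_def
proof (intro ballI allI impI)
  fix q :: "'e \<Rightarrow> 'k" and e :: real
  assume qc: "q \<in> spc_carrier (Pspace (Espace smul) n)" and e: "0 < e"
  then have q: "q \<in> Pc smul n" by (simp add: Pc_def)
  define T0 where "T0 = (\<Sum>j<length xs. norm (xs ! j))"
  have T00: "0 \<le> T0" by (simp add: T0_def sum_nonneg)
  define C where "C = 2 ^ n * (real n * T0) ^ n + 1"
  have "0 \<le> 2 ^ n * (real n * T0) ^ n" using T00 by simp
  then have C: "C > 0" unfolding C_def by linarith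
  define b where "b k = pol q (chunk n k xs)" for k
  define Rb where "Rb = 1 + (\<Sum>k<m. norm (b k))"
  have bR: "norm (b k) \<le> Rb - 1" if "k < m" for k
  proof -
    have "norm (b k) \<le> (\<Sum>k<m. norm (b k))" using that by (intro member_le_sum) auto
    then show ?thesis by (simp add: Rb_def)
  qed
  have Rb1: "1 \<le> Rb" by (simp add: Rb_def sum_nonneg)
  define X where "X = real m * Rb ^ (m - 1) * C"
  have X0: "0 \<le> X" using Rb1 C by (simp add: X_def)
  define d where "d = min (1 / C) (e / (X + 1))"
  have d: "d > 0" using C e X0 by (simp add: d_def)
  have chs: "(\<Sum>i<n. norm (chunk n k xs ! i)) \<le> real n * T0" if "k < m" for k
  proof -
    have "norm (chunk n k xs ! i) \<le> T0" if "i < n" for i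
    proof -
      have idx: "k * n + i < length xs" using len \<open>k < m\<close> that
        by (metis add.commute len add_less_cancel_left mult_Suc less_eq_Suc_le mult_le_mono1 order.strict_trans2 less_le_trans)
      have "chunk n k xs ! i = xs ! (k * n + i)" by (rule chunk_nth[OF len \<open>k < m\<close> that])
      moreover have "norm (xs ! (k * n + i)) \<le> (\<Sum>j<length xs. norm (xs ! j))"
        using idx by (intro member_le_sum[of "k * n + i" "{..<length xs}" "\<lambda>j. norm (xs ! j)"]) auto
      ultimately show ?thesis unfolding T0_def by simp
    qed
    then have "(\<Sum>i<n. norm (chunk n k xs ! i)) \<le> (\<Sum>i<n. T0)" by (intro sum_mono) auto
    then show ?thesis by simp
  qed
  show "\<exists>d>0. \<forall>q'\<in>spc_carrier (Pspace (Espace smul) n).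
      spc_norm (Pspace (Espace smul) n) (spc_diff (Pspace (Espace smul) n) q' q) < d \<longrightarrow>
      spc_norm Kspace (spc_diff Kspace (Mrep smul m n xs q') (Mrep smul m n xs q)) < e"
  proof (intro exI[of _ d] conjI ballI impI)
    show "0 < d" by (rule d)
    fix q' assume q'c: "q' \<in> spc_carrier (Pspace (Espace smul) n)"
    then have q': "q' \<in> Pc smul n" by (simp add: Pc_def)
    define D where "D = (\<lambda>x. q' x + (-1) * q x)"
    assume "spc_norm (Pspace (Espace smul) n) (spc_diff (Pspace (Espace smul) n) q' q) < d"
    then have pD: "pn D < d" by (simp add: spc_diff_def Pspace_def poly_norm_E D_def)
    have hbD: "hb D n (pn D)" "0 \<le> pn D" using diff_hb[OF q q'] by (auto simp: D_def)
    define a where "a k = pol q' (chunk n k xs)" for k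
    have ab: "norm (a k - b k) \<le> C * pn D" if "k < m" for k
    proof -
      have "a k - b k = pol D (chunk n k xs)" by (simp only: a_def b_def D_def pol_diff)
      also have "norm \<dots> \<le> 2 ^ n * pn D * (\<Sum>i<n. norm (chunk n k xs ! i)) ^ n"
        by (rule pol_bound[OF hbD chunk_len[OF len that]])
      also have "\<dots> \<le> 2 ^ n * pn D * (real n * T0) ^ n"
        using chs[OF that] hbD(2) by (intro mult_left_mono power_mono) (auto simp: sum_nonneg)
      also have "\<dots> \<le> C * pn D" using hbD(2) by (simp add: C_def algebra_simps)
      finally show ?thesis .
    qed
    have CpD: "C * pn D \<le> 1" using pD C by (simp add: d_def field_simps)
    have aR: "norm (a k) \<le> Rb" if "k < m" for k
      using ab[OF that] bR[OF that] CpD norm_triangle_ineq2[of "a k" "b k"] by linarith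
    have bR': "norm (b k) \<le> Rb" if "k < m" for k using bR[OF that] by linarith
    have "norm ((\<Prod>k<m. a k) - (\<Prod>k<m. b k)) \<le> real m * Rb ^ (m - 1) * (C * pn D)"
      by (rule prod_diff_bound) (use aR bR' ab in auto)
    also have "\<dots> = X * pn D" by (simp add: X_def)
    also have "\<dots> \<le> X * d" using pD X0 by (intro mult_left_mono) auto
    also have "\<dots> \<le> X * (e / (X + 1))" using X0 by (intro mult_left_mono) (auto simp: d_def)
    also have "\<dots> < e" using X0 e by (simp add: field_simps)
    finally have "norm ((\<Prod>k<m. a k) - (\<Prod>k<m. b k)) < e" .
    then show "spc_norm Kspace (spc_diff Kspace (Mrep smul m n xs q') (Mrep smul m n xs q)) < e"
      using q q' by (simp add: Kspace_def spc_diff_def Mrep_def a_def b_def)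
  qed
qed

lemma Mrep_carrier:
  assumes len: "length xs = m * n"
  shows "Mrep smul m n xs \<in> spc_carrier (Pspace (Pspace (Espace smul) n) m)"
proof -
  have 1: "cont_hom_poly (Pspace (Espace smul) n) Kspace m (Mrep smul m n xs)"
    using Mrep_hom[OF S] Mrep_cont[OF len] by (simp add: cont_hom_poly_def)
  have 2: "\<forall>q. q \<notin> spc_carrier (Pspace (Espace smul) n) \<longrightarrow> Mrep smul m n xs q = 0"
    by (simp add: Mrep_def Pc_def)
  have eq: "spc_carrier (Pspace (Pspace (Espace smul) n) m) = {P. cont_hom_poly (Pspace (Espace smul) n) Kspace m P
      \<and> (\<forall>q. q \<notin> spc_carrier (Pspace (Espace smul) n) \<longrightarrow> P q = 0)}"
    by (simp only: Pspace_def[of "Pspace (Espace smul) n" m] kspace.select_convs)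
  show ?thesis using 1 2 unfolding eq by blast
qed

lemma Mrep_mlin: "multilinear_map (Espace smul) (Pspace (Pspace (Espace smul) n) m) (m * n) (Mrep smul m n)"
  unfolding multilinear_map_def
proof (intro conjI allI impI)
  fix xs :: "'e list" assume "set xs \<subseteq> spc_carrier (Espace smul) \<and> length xs = m * n"
  then show "Mrep smul m n xs \<in> spc_carrier (Pspace (Pspace (Espace smul) n) m)"
    using Mrep_carrier by blast
next
  fix xs :: "'e list" and i a b c
  assume h: "set xs \<subseteq> spc_carrier (Espace smul) \<and> length xs = m * n \<and> i < m * n \<and>
      a \<in> spc_carrier (Espace smul) \<and> b \<in> spc_carrier (Espace smul)"
  then have len: "length xs = m * n" and i: "i < m * n" by auto
  show "Mrep smul m n (xs[i := spc_add (Espace smul) a b]) =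
      spc_add (Pspace (Pspace (Espace smul) n) m) (Mrep smul m n (xs[i := a])) (Mrep smul m n (xs[i := b]))"
    using Mrep_lin(1)[OF S len i] by (simp add: Espace_def Pspace_def)
  show "Mrep smul m n (xs[i := spc_smul (Espace smul) c a]) =
      spc_smul (Pspace (Pspace (Espace smul) n) m) c (Mrep smul m n (xs[i := a]))"
    using Mrep_lin(2)[OF S len i] by (simp add: Espace_def Pspace_def)
qed

end

lemma norm_Pspace: "spc_norm (Pspace V j) = poly_norm V"
  by (simp add: Pspace_def)

context
  fixes smul :: "'k::{real_normed_field,banach} \<Rightarrow> 'e::banach \<Rightarrow> 'e"
  assumes S: "K_banach_scaling smul"
begin

lemma W_norm: "spc_norm (Pspace (Pspace (Espace smul) n) m) P = Sup {norm (P q) | q. q \<in> Pc smul n \<and> pn q \<le> 1}"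
  by (simp only: norm_Pspace poly_norm_def[of "Pspace (Espace smul) n"] poly_norm_E Pc_def)

lemma zero_Pc: "(\<lambda>_. 0) \<in> Pc smul n" "pn (\<lambda>_::'e. 0 :: 'k) = 0"
proof -
  have "mlin smul n (\<lambda>_. 0)" by (simp add: mlin_def)
  then have "hom_poly (Espace smul) Kspace n (\<lambda>_. 0 :: 'k)" unfolding hom_poly_iff by blast
  moreover have "econt (\<lambda>_. 0 :: 'k)" by (auto simp: econt_def)
  ultimately show "(\<lambda>_. 0) \<in> Pc smul n" by (simp add: Pc_iff[OF S])
  have "{norm ((\<lambda>_::'e. 0::'k) x) | x. norm x \<le> 1} = {0}"
  proof (rule set_eqI, rule iffI)
    fix v assume "v \<in> {norm ((\<lambda>_::'e. 0::'k) x) | x. norm x \<le> 1}" then show "v \<in> {0}" by auto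
  next
    fix v :: real assume "v \<in> {0}"
    then have "v = norm ((\<lambda>_::'e. 0::'k) 0) \<and> norm (0::'e) \<le> 1" by simp
    then show "v \<in> {norm ((\<lambda>_::'e. 0::'k) x) | x. norm x \<le> 1}" by blast
  qed
  then show "pn (\<lambda>_::'e. 0 :: 'k) = 0" unfolding pn_def by simp
qed

lemma phi_Pc:
  fixes \<phi> :: "'e \<Rightarrow> 'k"
  assumes lin: "\<And>a y. \<phi> (smul a y) = a * \<phi> y" "\<And>y z. \<phi> (y + z) = \<phi> y + \<phi> z"
    and bnd: "\<And>y. norm (\<phi> y) \<le> norm y"
  shows "(\<lambda>z. \<phi> z ^ n) \<in> Pc smul n" "pn (\<lambda>z. \<phi> z ^ n) \<le> 1"
proof -
  define A where "A zs = (\<Prod>i<n. \<phi> (zs ! i))" for zs :: "'e list"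
  have Aupd: "A (zs[i := v]) = \<phi> v * (\<Prod>k\<in>{..<n} - {i}. \<phi> (zs ! k))" if "length zs = n" "i < n" for zs i v
  proof -
    have "A (zs[i := v]) = \<phi> (zs[i := v] ! i) * (\<Prod>k\<in>{..<n} - {i}. \<phi> (zs[i := v] ! k))"
      unfolding A_def by (rule prod_upd_one[OF that(2)])
    also have "(\<Prod>k\<in>{..<n} - {i}. \<phi> (zs[i := v] ! k)) = (\<Prod>k\<in>{..<n} - {i}. \<phi> (zs ! k))"
      by (rule prod.cong) auto
    finally show ?thesis using that by simp
  qed
  have "mlin smul n A" unfolding mlin_def
    by (simp add: Aupd lin algebra_simps)
  moreover have "\<phi> x ^ n = A (replicate n x)" for x by (simp add: A_def)
  ultimately have hp: "hom_poly (Espace smul) Kspace n (\<lambda>z. \<phi> z ^ n)" unfolding hom_poly_iff by blast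
  have phm: "\<phi> (- x) = - \<phi> x" for x using lin(1)[of "-1" x] by (simp add: smul_m1[OF S])
  have phd: "\<phi> y - \<phi> x = \<phi> (y - x)" for x y using lin(2)[of y "- x"] phm[of x] by simp
  have ec: "econt (\<lambda>z. \<phi> z ^ n)" unfolding econt_def
  proof (intro allI impI)
    fix x :: 'e and e :: real assume e: "0 < e"
    define R where "R = norm x + 1"
    have R1: "1 \<le> R" by (simp add: R_def)
    define K where "K = real n * R ^ (n - 1)"
    have K0: "0 \<le> K" using R1 by (simp add: K_def)
    define d where "d = min 1 (e / (K + 1))"
    have d: "d > 0" using e K0 by (simp add: d_def)
    show "\<exists>d>0. \<forall>y. norm (y - x) < d \<longrightarrow> norm (\<phi> y ^ n - \<phi> x ^ n) < e"
    proof (intro exI[of _ d] conjI allI impI)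
      show "0 < d" by (rule d)
      fix y assume y: "norm (y - x) < d"
      have ny: "norm y \<le> R" using y norm_triangle_ineq2[of y x] by (simp add: R_def d_def)
      have px: "norm (\<phi> x) \<le> R" using bnd[of x] by (simp add: R_def)
      have py: "norm (\<phi> y) \<le> R" using bnd[of y] ny by simp
      have pd: "norm (\<phi> y - \<phi> x) \<le> norm (y - x)" using bnd[of "y - x"] by (simp add: phd)
      have "norm ((\<Prod>k<n. \<phi> y) - (\<Prod>k<n. \<phi> x)) \<le> real n * R ^ (n - 1) * norm (y - x)"
        by (rule prod_diff_bound) (use px py pd in auto)
      then have "norm (\<phi> y ^ n - \<phi> x ^ n) \<le> K * norm (y - x)" by (simp add: K_def)
      also have "\<dots> \<le> K * d" using y K0 by (intro mult_left_mono) auto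
      also have "\<dots> \<le> K * (e / (K + 1))" using K0 by (intro mult_left_mono) (auto simp: d_def)
      also have "\<dots> < e" using K0 e by (simp add: field_simps)
      finally show "norm (\<phi> y ^ n - \<phi> x ^ n) < e" .
    qed
  qed
  show "(\<lambda>z. \<phi> z ^ n) \<in> Pc smul n" using hp ec by (simp add: Pc_iff[OF S])
  show "pn (\<lambda>z. \<phi> z ^ n) \<le> 1" unfolding pn_def
  proof (rule cSup_least)
    have "norm (0::'e) \<le> 1" by simp
    then show "{norm (\<phi> x ^ n) |x. norm x \<le> 1} \<noteq> {}" by blast
    fix v assume "v \<in> {norm (\<phi> x ^ n) |x. norm x \<le> 1}"
    then obtain x where x: "v = norm (\<phi> x ^ n)" "norm x \<le> 1" by auto
    have "norm (\<phi> x) \<le> 1" using bnd[of x] x by simp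
    then show "v \<le> 1" using x by (simp add: norm_power power_le_one)
  qed
qed

end

theorem mainTheorem7:
  fixes smul :: "'k::{real_normed_field, banach} \<Rightarrow> 'e::banach \<Rightarrow> 'e"
    and m n :: nat
  assumes "K_banach_scaling smul"
  shows "cont_hom_poly (Espace smul) (Pspace (Pspace (Espace smul) n) m) (m * n) (Jmap smul m n)
       \<and> (\<forall>x. spc_norm (Pspace (Pspace (Espace smul) n) m) (Jmap smul m n x) = norm x ^ (m * n))"
proof -
  note S = assms
  have z: "(\<lambda>_. 0) \<in> Pc smul n \<and> pn (\<lambda>_::'e. 0::'k) \<le> 1" using zero_Pc[OF S] by simp
  define W where "W = Pspace (Pspace (Espace smul) n) m"
  have Jval: "Jmap smul m n x q = (if q \<in> Pc smul n then q x ^ m else 0)" for x q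
    by (simp add: Jmap_def Pc_def)
  have hom: "hom_poly (Espace smul) W (m * n) (Jmap smul m n)"
    unfolding hom_poly_def W_def
    using Mrep_mlin[OF S] Jmap_Mrep[OF S] by blast
  have cont: "spc_continuous (Espace smul) W (Jmap smul m n)"
    unfolding spc_continuous_def
  proof (intro ballI allI impI)
    fix x :: 'e and e :: real assume e: "0 < e"
    define R where "R = norm x + 1"
    have R1: "1 \<le> R" by (simp add: R_def)
    define L where "L = real n * (2 ^ n * (real n * R) ^ n)"
    define K where "K = real m * (R ^ n) ^ (m - 1) * L"
    have K0: "0 \<le> K" using R1 by (simp add: K_def L_def)
    define d where "d = min 1 (e / (K + 1))"
    have d: "d > 0" using e K0 by (simp add: d_def)
    show "\<exists>d>0. \<forall>y\<in>spc_carrier (Espace smul). spc_norm (Espace smul) (spc_diff (Espace smul) y x) < d \<longrightarrow>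
        spc_norm W (spc_diff W (Jmap smul m n y) (Jmap smul m n x)) < e"
    proof (intro exI[of _ d] conjI ballI impI)
      show "0 < d" by (rule d)
      fix y assume "spc_norm (Espace smul) (spc_diff (Espace smul) y x) < d"
      then have y: "norm (y - x) < d" by (simp add: Espace_def spc_diff_def smul_m1[OF S])
      have nx: "norm x \<le> R" by (simp add: R_def)
      have ny: "norm y \<le> R" using y norm_triangle_ineq2[of y x] by (simp add: R_def d_def)
      have each: "norm (Jmap smul m n y q + (-1) * Jmap smul m n x q) \<le> K * norm (y - x)"
        if q: "q \<in> Pc smul n" "pn q \<le> 1" for q
      proof -
        have bx: "norm (q x) \<le> R ^ n"
          using q_val_bound[OF S q, of x] power_mono[OF nx, of n] by simp
        have by': "norm (q y) \<le> R ^ n"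
          using q_val_bound[OF S q, of y] power_mono[OF ny, of n] by simp
        have "norm ((\<Prod>k<m. q y) - (\<Prod>k<m. q x)) \<le> real m * (R ^ n) ^ (m - 1) * norm (q y - q x)"
          by (rule prod_diff_bound) (use bx by' in auto)
        also have "\<dots> \<le> real m * (R ^ n) ^ (m - 1) * (L * norm (y - x))"
          using q_lip[OF S q R1 nx ny] R1 by (intro mult_left_mono) (auto simp: L_def)
        finally show ?thesis using q by (simp add: Jval K_def mult.assoc)
      qed
      have "spc_norm W (spc_diff W (Jmap smul m n y) (Jmap smul m n x))
          = Sup {norm (Jmap smul m n y q + (-1) * Jmap smul m n x q) | q. q \<in> Pc smul n \<and> pn q \<le> 1}"
        unfolding W_def W_norm[OF S] by (simp add: spc_diff_def Pspace_def)
      also have "\<dots> \<le> K * norm (y - x)"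
        by (rule cSup_least) (use z each in blast)+
      also have "\<dots> \<le> K * d" using y K0 by (intro mult_left_mono) auto
      also have "\<dots> \<le> K * (e / (K + 1))" using K0 by (intro mult_left_mono) (auto simp: d_def)
      also have "\<dots> < e" using K0 e by (simp add: field_simps)
      finally show "spc_norm W (spc_diff W (Jmap smul m n y) (Jmap smul m n x)) < e" .
    qed
  qed
  have nrm: "spc_norm W (Jmap smul m n x) = norm x ^ (m * n)" for x
  proof -
    have eq: "spc_norm W (Jmap smul m n x) = Sup {norm (Jmap smul m n x q) | q. q \<in> Pc smul n \<and> pn q \<le> 1}"
      unfolding W_def by (rule W_norm[OF S])
    have up: "norm (Jmap smul m n x q) \<le> norm x ^ (m * n)" if "q \<in> Pc smul n" "pn q \<le> 1" for q
    proof -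
      have "norm (q x) ^ m \<le> (norm x ^ n) ^ m" using q_val_bound[OF S that] by (intro power_mono) auto
      then show ?thesis using that by (simp add: Jval norm_power power_mult[symmetric] mult.commute)
    qed
    obtain \<phi> :: "'e \<Rightarrow> 'k" where \<phi>: "\<And>a y. \<phi> (smul a y) = a * \<phi> y" "\<And>y z. \<phi> (y + z) = \<phi> y + \<phi> z"
      "\<And>y. norm (\<phi> y) \<le> norm y" "norm (\<phi> x) = norm x"
      using kHB[OF S, of x] by blast
    have q0: "(\<lambda>z. \<phi> z ^ n) \<in> Pc smul n" "pn (\<lambda>z. \<phi> z ^ n) \<le> 1" using phi_Pc[OF S \<phi>(1-3)] by auto
    have v0: "norm (Jmap smul m n x (\<lambda>z. \<phi> z ^ n)) = norm x ^ (m * n)"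
      using q0 \<phi>(4) by (simp add: Jval norm_power power_mult[symmetric] mult.commute)
    have "Sup {norm (Jmap smul m n x q) | q. q \<in> Pc smul n \<and> pn q \<le> 1} = norm x ^ (m * n)"
    proof (rule antisym)
      show "Sup {norm (Jmap smul m n x q) | q. q \<in> Pc smul n \<and> pn q \<le> 1} \<le> norm x ^ (m * n)"
        by (rule cSup_least) (use z up in blast)+
      show "norm x ^ (m * n) \<le> Sup {norm (Jmap smul m n x q) | q. q \<in> Pc smul n \<and> pn q \<le> 1}"
        unfolding v0[symmetric]
        by (rule cSup_upper) (use q0 up in \<open>auto simp: bdd_above_def\<close>)
    qed
    then show ?thesis using eq by simp
  qed
  show ?thesis using hom cont nrm by (simp add: cont_hom_poly_def W_def)
qed

end
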